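(* Let $\mu\in\mathbb{R}^p$ be deterministic, $l=(l_1,\dots,l_n)\in\{-1,1\}^n$, and $\sigma_1,\dots,\sigma_p\ge 0$. Observe $Y_j=l_j\mu+\varepsilon_j$, $j=1,\dots,n$, where $\varepsilon_j=(\varepsilon_{1j},\dots,\varepsilon_{pj})^\top$ and all $\varepsilon_{ij}\sim N(0,\sigma_i^2)$ are independent. Let $Y\in\mathbb{R}^{n\times p}$ be the matrix with rows $Y_1^\top,\dots,Y_n^\top$, let $\hat v$ be a unit-norm leading eigenvector of $YY^\top$, and set $\hat l_j=\mathrm{sgn}(\hat v_j)$, $j=1,\dots,n$. Let $\sigma_*=\max_i\sigma_i$ and $\tilde\sigma=(\sum_i\sigma_i^4)^{1/4}$. Then there is a universal constant $C>0$ such that \[ \mathbb{E}\,\mathcal{M}(l,\hat l)\le C\left(\frac{n\|\mu\|_2\sigma_*+n\sigma_*^2+\sqrt n\,\tilde\sigma^2}{n\|\mu\|_2^2}\wedge 1\right). \]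
   Context: The misclassification rate is $\mathcal{M}(l,\hat l)=\frac1n\min\{\sum_{i=1}^n 1_{\{l_i\ne\hat l_i\}},\ \sum_{i=1}^n 1_{\{l_i\ne-\hat l_i\}}\}$. $a\wedge b=\min(a,b)$. *)

theory Defs
  imports "HOL-Probability.Probability"
begin

text \<open>Probability space of the standardized noise: i.i.d. N(0,1) variables g(i,j),
  i < p (coordinate), j < n (sample). The actual noise is eps_ij = sigma_i * g(i,j),
  which is N(0, sigma_i^2) (degenerate at 0 when sigma_i = 0).\<close>
definition noise_space :: "nat \<Rightarrow> nat \<Rightarrow> (nat \<times> nat \<Rightarrow> real) measure" where
  "noise_space n p = PiM ({..<p} \<times> {..<n}) (\<lambda>_. density lborel std_normal_density)"

text \<open>Entry (j,i) of the data matrix Y (row j = Y_j^T): Y_ij = l_j mu_i + sigma_i g(i,j).\<close>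
definition data_entry ::
  "(nat \<Rightarrow> real) \<Rightarrow> (nat \<Rightarrow> real) \<Rightarrow> (nat \<Rightarrow> real) \<Rightarrow> (nat \<times> nat \<Rightarrow> real) \<Rightarrow> nat \<Rightarrow> nat \<Rightarrow> real" where
  "data_entry \<mu> l \<sigma> g j i = l j * \<mu> i + \<sigma> i * g (i, j)"

definition gram ::
  "nat \<Rightarrow> (nat \<Rightarrow> real) \<Rightarrow> (nat \<Rightarrow> real) \<Rightarrow> (nat \<Rightarrow> real) \<Rightarrow> (nat \<times> nat \<Rightarrow> real) \<Rightarrow> nat \<Rightarrow> nat \<Rightarrow> real" where
  "gram p \<mu> l \<sigma> g j k = (\<Sum>i<p. data_entry \<mu> l \<sigma> g j i * data_entry \<mu> l \<sigma> g k i)"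

definition is_eigenvalue :: "nat \<Rightarrow> (nat \<Rightarrow> nat \<Rightarrow> real) \<Rightarrow> real \<Rightarrow> bool" where
  "is_eigenvalue n K lam \<longleftrightarrow>
     (\<exists>v. (\<exists>j<n. v j \<noteq> 0) \<and> (\<forall>j<n. (\<Sum>k<n. K j k * v k) = lam * v j))"

definition unit_leading_eigenvector :: "nat \<Rightarrow> (nat \<Rightarrow> nat \<Rightarrow> real) \<Rightarrow> (nat \<Rightarrow> real) \<Rightarrow> bool" where
  "unit_leading_eigenvector n K v \<longleftrightarrow>
     (\<Sum>j<n. (v j)\<^sup>2) = 1 \<and>
     (\<exists>lam. (\<forall>j<n. (\<Sum>k<n. K j k * v k) = lam * v j) \<and>
            (\<forall>lam'. is_eigenvalue n K lam' \<longrightarrow> lam' \<le> lam))"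

definition miscl_rate :: "nat \<Rightarrow> (nat \<Rightarrow> real) \<Rightarrow> (nat \<Rightarrow> real) \<Rightarrow> real" where
  "miscl_rate n l lh =
     min (real (card {j\<in>{..<n}. l j \<noteq> lh j})) (real (card {j\<in>{..<n}. l j \<noteq> - lh j})) / real n"

definition norm2 :: "nat \<Rightarrow> (nat \<Rightarrow> real) \<Rightarrow> real" where
  "norm2 p \<mu> = sqrt (\<Sum>i<p. (\<mu> i)\<^sup>2)"

text \<open>sigma_* = max_i sigma_i (taken as 0 when p = 0).\<close>
definition sigma_star :: "nat \<Rightarrow> (nat \<Rightarrow> real) \<Rightarrow> real" where
  "sigma_star p \<sigma> = Max (insert 0 (\<sigma> ` {..<p}))"

definition sigma_tilde :: "nat \<Rightarrow> (nat \<Rightarrow> real) \<Rightarrow> real" where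
  "sigma_tilde p \<sigma> = root 4 (\<Sum>i<p. (\<sigma> i) ^ 4)"

text \<open>Right-hand side (without C): the fraction min 1; when mu = 0 the fraction is
  read as +infinity (so the bound is 1).\<close>
definition error_bound :: "nat \<Rightarrow> nat \<Rightarrow> (nat \<Rightarrow> real) \<Rightarrow> (nat \<Rightarrow> real) \<Rightarrow> real" where
  "error_bound n p \<mu> \<sigma> =
     (if norm2 p \<mu> = 0 then 1 else
      min ((real n * norm2 p \<mu> * sigma_star p \<sigma> + real n * (sigma_star p \<sigma>)\<^sup>2
            + sqrt (real n) * (sigma_tilde p \<sigma>)\<^sup>2) / (real n * (norm2 p \<mu>)\<^sup>2)) 1)"

end

theory Submission
  imports Defs "HOL-Probability.Probability"
begin

abbreviation "SN \<equiv> density lborel std_normal_density"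

lemma prob_SN: "prob_space SN" by (rule prob_space_normal_density) simp

lemma prob_NS: "prob_space (noise_space n p)"
  unfolding noise_space_def by (intro prob_space_PiM prob_SN)

lemma sets_SN[simp]: "sets SN = sets borel" by simp
lemma space_SN[simp]: "space SN = UNIV" by simp

lemma indep_coords:
  fixes I :: "'a set"
  assumes "I \<noteq> {}"
  shows "prob_space.indep_vars (PiM I (\<lambda>_. SN)) (\<lambda>_. SN) (\<lambda>i \<omega>. \<omega> i) I"
proof -
  interpret P: prob_space "PiM I (\<lambda>_. SN)" by (intro prob_space_PiM prob_SN)
  have rv: "(\<lambda>\<omega>. \<omega> i) \<in> measurable (PiM I (\<lambda>_. SN)) SN" for i :: 'a
  proof (cases "i \<in> I")
    case True then show ?thesis using measurable_component_singleton[of i I "\<lambda>_. SN"] by simp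
  next
    case False
    have "(\<lambda>\<omega>. \<omega> i) \<in> measurable (PiM I (\<lambda>_. SN)) SN \<longleftrightarrow> (\<lambda>\<omega>. undefined) \<in> measurable (PiM I (\<lambda>_. SN)) SN"
      by (rule measurable_cong) (use False in \<open>auto simp: space_PiM PiE_def extensional_def\<close>)
    then show ?thesis by simp
  qed
  have 1: "distr (PiM I (\<lambda>_. SN)) (PiM I (\<lambda>_. SN)) (\<lambda>x. \<lambda>i\<in>I. x i) = PiM I (\<lambda>_. SN)"
  proof -
    have "distr (PiM I (\<lambda>_. SN)) (PiM I (\<lambda>_. SN)) (\<lambda>x. \<lambda>i\<in>I. x i) = distr (PiM I (\<lambda>_. SN)) (PiM I (\<lambda>_. SN)) (\<lambda>x. x)"
      by (rule distr_cong) (auto simp: space_PiM PiE_def extensional_def restrict_def)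
    also have "\<dots> = PiM I (\<lambda>_. SN)" by simp
    finally show ?thesis .
  qed
  have 2: "(\<Pi>\<^sub>M i\<in>I. distr (PiM I (\<lambda>_. SN)) SN (\<lambda>\<omega>. \<omega> i)) = PiM I (\<lambda>_. SN)"
    by (rule PiM_cong) (auto intro!: distr_PiM_component prob_SN)
  show ?thesis
    by (subst P.indep_vars_iff_distr_eq_PiM[OF assms rv]) (simp add: 1 2)
qed


lemma coord_distributed:
  assumes "k \<in> I"
  shows "distributed (PiM I (\<lambda>_. SN)) lborel (\<lambda>\<omega>. \<omega> k) std_normal_density"
proof -
  have meas: "(\<lambda>\<omega>. \<omega> k) \<in> measurable (PiM I (\<lambda>_. SN)) SN"
    using measurable_component_singleton[of k I "\<lambda>_. SN"] assms by simp
  have meas2: "(\<lambda>\<omega>. \<omega> k) \<in> measurable (PiM I (\<lambda>_. SN)) lborel"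
    using meas by (simp add: measurable_def)
  have "distr (PiM I (\<lambda>_. SN)) lborel (\<lambda>\<omega>. \<omega> k) = distr (PiM I (\<lambda>_. SN)) SN (\<lambda>\<omega>. \<omega> k)"
    by (rule measure_eqI) (simp_all add: emeasure_distr[OF meas] emeasure_distr[OF meas2])
  also have "\<dots> = SN" using distr_PiM_component[of I "\<lambda>_. SN" k] prob_SN assms by simp
  finally show ?thesis unfolding distributed_def using meas2 by simp
qed

lemma lin_comb_normal:
  assumes fin: "finite J" and JI: "J \<subseteq> I" and pos: "0 < (\<Sum>k\<in>J. (c k)\<^sup>2)"
  shows "distributed (PiM I (\<lambda>_. SN)) lborel (\<lambda>\<omega>. \<Sum>k\<in>J. c k * \<omega> k)
           (normal_density 0 (sqrt (\<Sum>k\<in>J. (c k)\<^sup>2)))"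
proof -
  interpret P: prob_space "PiM I (\<lambda>_. SN)" by (intro prob_space_PiM prob_SN)
  define J' where "J' = {k\<in>J. c k \<noteq> 0}"
  have finJ': "finite J'" using fin by (simp add: J'_def)
  have ne: "J' \<noteq> {}"
  proof
    assume "J' = {}"
    then have "\<forall>k\<in>J. c k = 0" by (auto simp: J'_def)
    then show False using pos by simp
  qed
  then have Ine: "I \<noteq> {}" using JI J'_def by auto
  have ind0: "P.indep_vars (\<lambda>_. SN) (\<lambda>i \<omega>. \<omega> i) J'"
    by (rule P.indep_vars_subset[OF indep_coords[OF Ine]]) (use JI in \<open>auto simp: J'_def\<close>)
  have ind: "P.indep_vars (\<lambda>_. borel) (\<lambda>k \<omega>. c k * \<omega> k) J'"
    by (rule P.indep_vars_compose2[OF ind0]) simp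
  have dist: "distributed (PiM I (\<lambda>_. SN)) lborel (\<lambda>\<omega>. c k * \<omega> k) (normal_density 0 (\<bar>c k\<bar>))"
    if "k \<in> J'" for k
  proof -
    have "c k \<noteq> 0" using that by (simp add: J'_def)
    have "distributed (PiM I (\<lambda>_. SN)) lborel (\<lambda>\<omega>. \<omega> k) std_normal_density"
      by (rule coord_distributed) (use that JI in \<open>auto simp: J'_def\<close>)
    from P.normal_density_affine[OF this, where \<alpha>="c k" and \<beta>=0] \<open>c k \<noteq> 0\<close>
    show ?thesis by (auto simp: J'_def)
  qed
  have "distributed (PiM I (\<lambda>_. SN)) lborel (\<lambda>x. \<Sum>k\<in>J'. c k * x k)
          (normal_density (\<Sum>k\<in>J'. 0) (sqrt (\<Sum>k\<in>J'. (\<bar>c k\<bar>)\<^sup>2)))"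
    by (rule P.sum_indep_normal[OF finJ' ne ind]) (use dist in \<open>auto simp: J'_def\<close>)
  moreover have "(\<lambda>x. \<Sum>k\<in>J'. c k * x k) = (\<lambda>x. \<Sum>k\<in>J. c k * x k)"
    unfolding J'_def by (intro ext sum.mono_neutral_left) (use fin in auto)
  moreover have "(\<Sum>k\<in>J'. (\<bar>c k\<bar>)\<^sup>2) = (\<Sum>k\<in>J. (c k)\<^sup>2)"
    unfolding J'_def power2_abs by (intro sum.mono_neutral_left) (use fin in auto)
  ultimately show ?thesis by simp
qed


lemma nn_normal_density: "0 < s \<Longrightarrow> (\<integral>\<^sup>+y. ennreal (normal_density m s y) \<partial>lborel) = 1"
  by (subst nn_integral_eq_integral) auto

lemma normal_exp_sq_identity:
  fixes r t y :: real
  assumes r: "0 < r" and a: "0 < 1 - 2*t*r\<^sup>2"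
  shows "normal_density 0 r y * exp (t*y\<^sup>2) =
         (1/sqrt (1 - 2*t*r\<^sup>2)) * normal_density 0 (r / sqrt (1 - 2*t*r\<^sup>2)) y"
proof -
  define a where "a = 1 - 2*t*r\<^sup>2"
  have a0: "0 < a" using a by (simp add: a_def)
  have sa: "0 < sqrt a" using a0 by simp
  have e: "- y\<^sup>2 / (2 * r\<^sup>2) + t * y\<^sup>2 = - y\<^sup>2 / (2 * (r / sqrt a)\<^sup>2)"
    using r a0 by (simp add: power_divide a_def field_simps)
  have s1: "sqrt (2 * pi * r\<^sup>2) = sqrt (2*pi) * r" using r by (simp add: real_sqrt_mult)
  have s2: "sqrt (2 * pi * (r / sqrt a)\<^sup>2) = sqrt (2*pi) * (r / sqrt a)"
    using r sa by (simp add: real_sqrt_mult real_sqrt_divide)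
  have "normal_density 0 r y * exp (t*y\<^sup>2) = 1 / sqrt (2 * pi * r\<^sup>2) * exp (- y\<^sup>2 / (2 * r\<^sup>2) + t * y\<^sup>2)"
    by (simp add: normal_density_def mult_exp_exp algebra_simps)
  also have "\<dots> = (1/sqrt a) * (1 / sqrt (2 * pi * (r / sqrt a)\<^sup>2) * exp (- y\<^sup>2 / (2 * (r / sqrt a)\<^sup>2)))"
    unfolding e s1 s2 using r sa by (simp add: field_simps)
  also have "\<dots> = (1/sqrt a) * normal_density 0 (r / sqrt a) y"
    by (simp add: normal_density_def)
  finally show ?thesis by (simp add: a_def)
qed

lemma nn_normal_exp_sq:
  fixes r t :: real
  assumes r: "0 < r" and a: "0 < 1 - 2*t*r\<^sup>2"
  shows "(\<integral>\<^sup>+y. ennreal (normal_density 0 r y) * ennreal (exp (t*y\<^sup>2)) \<partial>lborel)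
          = ennreal (1/sqrt (1 - 2*t*r\<^sup>2))"
proof -
  have "(\<integral>\<^sup>+y. ennreal (normal_density 0 r y) * ennreal (exp (t*y\<^sup>2)) \<partial>lborel)
      = (\<integral>\<^sup>+y. ennreal (1/sqrt (1 - 2*t*r\<^sup>2)) * ennreal (normal_density 0 (r / sqrt (1 - 2*t*r\<^sup>2)) y) \<partial>lborel)"
  proof (intro nn_integral_cong)
    fix x
    have "ennreal (normal_density 0 r x) * ennreal (exp (t*x\<^sup>2)) = ennreal (normal_density 0 r x * exp (t*x\<^sup>2))"
      by (simp add: ennreal_mult)
    also have "\<dots> = ennreal ((1/sqrt (1 - 2*t*r\<^sup>2)) * normal_density 0 (r / sqrt (1 - 2*t*r\<^sup>2)) x)"
      by (simp only: normal_exp_sq_identity[OF r a])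
    also have "\<dots> = ennreal (1/sqrt (1 - 2*t*r\<^sup>2)) * ennreal (normal_density 0 (r / sqrt (1 - 2*t*r\<^sup>2)) x)"
      by (rule ennreal_mult) (use a in auto)
    finally show "ennreal (normal_density 0 r x) * ennreal (exp (t*x\<^sup>2)) = ennreal (1/sqrt (1 - 2*t*r\<^sup>2)) * ennreal (normal_density 0 (r / sqrt (1 - 2*t*r\<^sup>2)) x)" .
  qed
  also have "\<dots> = ennreal (1/sqrt (1 - 2*t*r\<^sup>2))"
    by (subst nn_integral_cmult) (use r a in \<open>simp_all add: nn_normal_density\<close>)
  finally show ?thesis .
qed

lemma nn_normal_sq:
  fixes r :: real
  assumes r: "0 < r"
  shows "(\<integral>\<^sup>+y. ennreal (normal_density 0 r y) * ennreal (y\<^sup>2) \<partial>lborel) = ennreal (r\<^sup>2)"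
proof -
  have "(\<integral>\<^sup>+y. ennreal (normal_density 0 r y) * ennreal (y\<^sup>2) \<partial>lborel)
      = (\<integral>\<^sup>+y. ennreal (normal_density 0 r y * (y - 0)^(2*1)) \<partial>lborel)"
    by (intro nn_integral_cong) (simp add: ennreal_mult'[symmetric] del: ennreal_mult')
  also have "\<dots> = ennreal (\<integral>y. normal_density 0 r y * (y - 0)^(2*1) \<partial>lborel)"
    by (intro nn_integral_eq_integral integrable_normal_moment) (use r in auto)
  also have "\<dots> = ennreal (r\<^sup>2)"
    using integral_normal_moment_even[of r 0 1] r by simp
  finally show ?thesis .
qed


lemma sum_sq_zero_iff:
  fixes c :: "'a \<Rightarrow> real"
  assumes "finite J" "(\<Sum>k\<in>J. (c k)\<^sup>2) = 0"
  shows "\<forall>k\<in>J. c k = 0"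
  using assms sum_nonneg_eq_0_iff[of J "\<lambda>k. (c k)\<^sup>2"] by auto

lemma lin_comb_mgf_sq:
  fixes c :: "'a \<Rightarrow> real"
  assumes fin: "finite J" and JI: "J \<subseteq> I" and a: "0 < 1 - 2*t*(\<Sum>k\<in>J. (c k)\<^sup>2)"
  shows "(\<integral>\<^sup>+\<omega>. ennreal (exp (t * (\<Sum>k\<in>J. c k * \<omega> k)\<^sup>2)) \<partial>PiM I (\<lambda>_. SN))
          = ennreal (1/sqrt (1 - 2*t*(\<Sum>k\<in>J. (c k)\<^sup>2)))"
proof (cases "(\<Sum>k\<in>J. (c k)\<^sup>2) = 0")
  case True
  interpret P: prob_space "PiM I (\<lambda>_. SN)" by (intro prob_space_PiM prob_SN)
  have "\<forall>k\<in>J. c k = 0" using sum_sq_zero_iff[OF fin True] .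
  then have "(\<Sum>k\<in>J. c k * \<omega> k) = 0" for \<omega> by simp
  then show ?thesis using True by (simp add: P.emeasure_space_1)
next
  case False
  define S where "S = (\<Sum>k\<in>J. (c k)\<^sup>2)"
  have S0: "0 < S" using False unfolding S_def by (metis less_eq_real_def sum_nonneg zero_le_power2)
  have r: "0 < sqrt S" using S0 by simp
  have D: "distributed (PiM I (\<lambda>_. SN)) lborel (\<lambda>\<omega>. \<Sum>k\<in>J. c k * \<omega> k) (normal_density 0 (sqrt S))"
    unfolding S_def by (rule lin_comb_normal[OF fin JI]) (use S0 in \<open>simp add: S_def\<close>)
  have "(\<integral>\<^sup>+\<omega>. ennreal (exp (t * (\<Sum>k\<in>J. c k * \<omega> k)\<^sup>2)) \<partial>PiM I (\<lambda>_. SN))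
      = (\<integral>\<^sup>+y. ennreal (normal_density 0 (sqrt S) y) * ennreal (exp (t*y\<^sup>2)) \<partial>lborel)"
    by (rule distributed_nn_integral[OF D, symmetric]) simp
  also have "\<dots> = ennreal (1/sqrt (1 - 2*t*(sqrt S)\<^sup>2))"
    by (rule nn_normal_exp_sq[OF r]) (use a S0 in \<open>simp add: S_def\<close>)
  finally show ?thesis using S0 by (simp add: S_def)
qed

lemma lin_comb_sq:
  fixes c :: "'a \<Rightarrow> real"
  assumes fin: "finite J" and JI: "J \<subseteq> I"
  shows "(\<integral>\<^sup>+\<omega>. ennreal ((\<Sum>k\<in>J. c k * \<omega> k)\<^sup>2) \<partial>PiM I (\<lambda>_. SN))
          = ennreal (\<Sum>k\<in>J. (c k)\<^sup>2)"
proof (cases "(\<Sum>k\<in>J. (c k)\<^sup>2) = 0")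
  case True
  have "\<forall>k\<in>J. c k = 0" using sum_sq_zero_iff[OF fin True] .
  then have "(\<Sum>k\<in>J. c k * \<omega> k) = 0" for \<omega> by simp
  then show ?thesis using True by simp
next
  case False
  define S where "S = (\<Sum>k\<in>J. (c k)\<^sup>2)"
  have S0: "0 < S" using False unfolding S_def by (metis less_eq_real_def sum_nonneg zero_le_power2)
  have r: "0 < sqrt S" using S0 by simp
  have D: "distributed (PiM I (\<lambda>_. SN)) lborel (\<lambda>\<omega>. \<Sum>k\<in>J. c k * \<omega> k) (normal_density 0 (sqrt S))"
    unfolding S_def by (rule lin_comb_normal[OF fin JI]) (use S0 in \<open>simp add: S_def\<close>)
  have "(\<integral>\<^sup>+\<omega>. ennreal ((\<Sum>k\<in>J. c k * \<omega> k)\<^sup>2) \<partial>PiM I (\<lambda>_. SN))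
      = (\<integral>\<^sup>+y. ennreal (normal_density 0 (sqrt S) y) * ennreal (y\<^sup>2) \<partial>lborel)"
    by (rule distributed_nn_integral[OF D, symmetric]) simp
  also have "\<dots> = ennreal ((sqrt S)\<^sup>2)" by (rule nn_normal_sq[OF r])
  finally show ?thesis using S0 by (simp add: S_def)
qed


lemma NS_def': "noise_space n p = PiM ({..<p} \<times> {..<n}) (\<lambda>_. SN)"
  by (simp add: noise_space_def)

lemma row_meas:
  fixes F :: "real \<Rightarrow> real"
  assumes F: "F \<in> borel_measurable borel"
  shows "(\<lambda>b. ennreal (F (\<Sum>j<n. x j * b (i,j)))) \<in> borel_measurable (PiM ({i} \<times> {..<n}) (\<lambda>_. SN))"
proof -
  have c: "(\<lambda>b. b (i,j)) \<in> borel_measurable (PiM ({i} \<times> {..<n}) (\<lambda>_. SN))" if "j < n" for j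
    using measurable_component_singleton[of "(i,j)" "{i} \<times> {..<n}" "\<lambda>_. SN"] that
    by (simp add: measurable_def)
  have "(\<lambda>b. \<Sum>j<n. x j * b (i,j)) \<in> borel_measurable (PiM ({i} \<times> {..<n}) (\<lambda>_. SN))"
    by (intro borel_measurable_sum borel_measurable_times borel_measurable_const c) simp
  then show ?thesis using F by measurable
qed

lemma block_indep_nn:
  fixes F :: "nat \<Rightarrow> real \<Rightarrow> real" and x :: "nat \<Rightarrow> real"
  assumes n: "1 \<le> n" and p: "1 \<le> p" and meas: "\<And>i. F i \<in> borel_measurable borel"
  shows "(\<integral>\<^sup>+\<omega>. (\<Prod>i<p. ennreal (F i (\<Sum>j<n. x j * \<omega> (i,j)))) \<partial>noise_space n p)
       = (\<Prod>i<p. \<integral>\<^sup>+\<omega>. ennreal (F i (\<Sum>j<n. x j * \<omega> (i,j))) \<partial>noise_space n p)"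
proof -
  let ?I = "{..<p} \<times> {..<n}"
  interpret P: prob_space "PiM ?I (\<lambda>_. SN)" by (intro prob_space_PiM prob_SN)
  have Ine: "?I \<noteq> {}" using n p by (auto simp: lessThan_empty_iff)
  have ind1: "P.indep_vars (\<lambda>i. PiM ({i} \<times> {..<n}) (\<lambda>_. SN))
                 (\<lambda>i \<omega>. restrict (\<lambda>k. \<omega> k) ({i} \<times> {..<n})) {..<p}"
    by (rule P.indep_vars_restrict[OF indep_coords[OF Ine]]) (auto simp: disjoint_family_on_def)
  have ind2: "P.indep_vars (\<lambda>_. borel)
      (\<lambda>i \<omega>. (\<lambda>b. ennreal (F i (\<Sum>j<n. x j * b (i,j)))) (restrict (\<lambda>k. \<omega> k) ({i} \<times> {..<n}))) {..<p}"
    by (rule P.indep_vars_compose2[OF ind1]) (rule row_meas[OF meas])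
  have eq: "(\<lambda>b. ennreal (F i (\<Sum>j<n. x j * b (i,j)))) (restrict (\<lambda>k. \<omega> k) ({i} \<times> {..<n}))
            = ennreal (F i (\<Sum>j<n. x j * \<omega> (i,j)))" for i \<omega>
  proof -
    have "(\<Sum>j<n. x j * restrict (\<lambda>k. \<omega> k) ({i} \<times> {..<n}) (i,j)) = (\<Sum>j<n. x j * \<omega> (i,j))"
      by (rule sum.cong) auto
    then show ?thesis by simp
  qed
  have ind3: "P.indep_vars (\<lambda>_. borel) (\<lambda>i \<omega>. ennreal (F i (\<Sum>j<n. x j * \<omega> (i,j)))) {..<p}"
    using ind2 unfolding eq .
  show ?thesis unfolding NS_def'
    by (rule P.indep_vars_nn_integral[OF _ ind3]) auto
qed


definition qf :: "nat \<Rightarrow> (nat \<Rightarrow> nat \<Rightarrow> real) \<Rightarrow> (nat \<Rightarrow> real) \<Rightarrow> real" where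
  "qf n K x = (\<Sum>j<n. \<Sum>k<n. x j * K j k * x k)"

definition sqn :: "nat \<Rightarrow> (nat \<Rightarrow> real) \<Rightarrow> real" where
  "sqn n x = (\<Sum>j<n. (x j)\<^sup>2)"

lemma quad_zero_lemma:
  fixes a b :: real
  assumes "\<And>t. a*t + b*t\<^sup>2 \<le> 0"
  shows "a = 0"
proof (rule ccontr)
  assume a: "a \<noteq> 0"
  define c where "c = \<bar>b\<bar> + 1"
  have c: "c \<ge> 1" by (simp add: c_def)
  define t where "t = a / (2*c)"
  have "a*t + b*t\<^sup>2 \<ge> a\<^sup>2/(2*c) - \<bar>b\<bar> * a\<^sup>2/(4*c\<^sup>2)"
  proof -
    have "- \<bar>b\<bar> * t\<^sup>2 \<le> b*t\<^sup>2" by (rule mult_right_mono) auto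
    then have "b*t\<^sup>2 \<ge> - (\<bar>b\<bar>*t\<^sup>2)" by simp
    moreover have "t\<^sup>2 = a\<^sup>2/(4*c\<^sup>2)" by (simp add: t_def power_divide power_mult_distrib)
    moreover have "a*t = a\<^sup>2/(2*c)" by (simp add: t_def power2_eq_square)
    ultimately show ?thesis by simp
  qed
  moreover have "\<bar>b\<bar> * a\<^sup>2/(4*c\<^sup>2) \<le> c * a\<^sup>2/(4*c\<^sup>2)"
    by (intro divide_right_mono mult_right_mono) (auto simp: c_def)
  moreover have "c * a\<^sup>2/(4*c\<^sup>2) = a\<^sup>2/(4*c)" using c by (simp add: power2_eq_square field_simps)
  moreover have "a\<^sup>2/(2*c) - a\<^sup>2/(4*c) = a\<^sup>2/(4*c)" using c by (simp add: field_simps)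
  moreover have "a\<^sup>2/(4*c) > 0" using a c by simp
  ultimately have "a*t + b*t\<^sup>2 > 0" by linarith
  with assms[of t] show False by simp
qed

lemma qf_expand:
  assumes sym: "\<And>j k. j < n \<Longrightarrow> k < n \<Longrightarrow> K j k = K k j"
  shows "qf n K (\<lambda>j. x j + t * y j) = qf n K x + 2*t*(\<Sum>j<n. y j * (\<Sum>k<n. K j k * x k)) + t\<^sup>2 * qf n K y"
proof -
  have s: "(\<Sum>j<n. \<Sum>k<n. x j * K j k * y k) = (\<Sum>j<n. \<Sum>k<n. y j * K j k * x k)"
    by (subst sum.swap) (auto intro!: sum.cong simp: sym mult_ac)
  have "qf n K (\<lambda>j. x j + t * y j) = qf n K x + t * (\<Sum>j<n. \<Sum>k<n. x j * K j k * y k)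
        + t * (\<Sum>j<n. \<Sum>k<n. y j * K j k * x k) + t\<^sup>2 * qf n K y"
    unfolding qf_def by (simp add: algebra_simps sum.distrib sum_distrib_left power2_eq_square)
  also have "\<dots> = qf n K x + 2*t*(\<Sum>j<n. \<Sum>k<n. y j * K j k * x k) + t\<^sup>2 * qf n K y"
    by (simp add: s)
  also have "(\<Sum>j<n. \<Sum>k<n. y j * K j k * x k) = (\<Sum>j<n. y j * (\<Sum>k<n. K j k * x k))"
    by (simp add: sum_distrib_left mult_ac)
  finally show ?thesis .
qed

lemma sqn_expand:
  "sqn n (\<lambda>j. x j + t * y j) = sqn n x + 2*t*(\<Sum>j<n. y j * x j) + t\<^sup>2 * sqn n y"
  unfolding sqn_def by (simp add: algebra_simps sum.distrib sum_distrib_left power2_eq_square)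

lemma qf_scale: "qf n K (\<lambda>j. c * x j) = c\<^sup>2 * qf n K x"
  unfolding qf_def by (simp add: sum_distrib_left power2_eq_square mult_ac)

lemma sqn_scale: "sqn n (\<lambda>j. c * x j) = c\<^sup>2 * sqn n x"
  unfolding sqn_def by (simp add: sum_distrib_left power_mult_distrib)

lemma sqn_nonneg: "0 \<le> sqn n x" unfolding sqn_def by (simp add: sum_nonneg)

lemma sqn_zero: "sqn n x = 0 \<Longrightarrow> j < n \<Longrightarrow> x j = 0"
  unfolding sqn_def using sum_nonneg_eq_0_iff[of "{..<n}" "\<lambda>j. (x j)\<^sup>2"] by auto

lemma qf_zero: "sqn n x = 0 \<Longrightarrow> qf n K x = 0"
  unfolding qf_def using sqn_zero[of n x] by simp

lemma qf_cong: "(\<And>j. j < n \<Longrightarrow> x j = y j) \<Longrightarrow> qf n K x = qf n K y"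
  unfolding qf_def by simp
lemma sqn_cong: "(\<And>j. j < n \<Longrightarrow> x j = y j) \<Longrightarrow> sqn n x = sqn n y"
  unfolding sqn_def by simp

lemma rayleigh_max_exists:
  assumes n: "1 \<le> n"
  shows "\<exists>x. sqn n x = 1 \<and> (\<forall>y. sqn n y = 1 \<longrightarrow> qf n K y \<le> qf n K x)"
proof -
  define S where "S j = (if j < n then {-1..1} else {0::real})" for j
  define T where "T = PiE UNIV S \<inter> {x. sqn n x = 1}"
  have cP: "compact (PiE UNIV S)"
  proof -
    have "compactin (product_topology (\<lambda>_. euclidean) UNIV) (PiE UNIV S)"
      by (subst compactin_PiE) (auto simp: S_def)
    then show ?thesis by (simp add: euclidean_product_topology)
  qed
  have cont_sqn: "continuous_on UNIV (\<lambda>x::nat\<Rightarrow>real. sqn n x)"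
    unfolding sqn_def by (intro continuous_intros continuous_on_product_coordinates)
  have cont_qf: "continuous_on A (\<lambda>x::nat\<Rightarrow>real. qf n K x)" for A
    unfolding qf_def
    by (intro continuous_intros continuous_on_subset[OF continuous_on_product_coordinates]) auto
  have clo: "closed {x::nat\<Rightarrow>real. sqn n x = 1}"
    by (rule closed_Collect_eq[OF cont_sqn continuous_on_const])
  have cT: "compact T" unfolding T_def by (rule compact_Int_closed[OF cP clo])
  define e :: "nat \<Rightarrow> real" where "e j = (if j = 0 then 1 else 0)" for j
  have "(\<Sum>j<n. (e j)\<^sup>2) = (\<Sum>j<n. if j = 0 then 1 else 0)"
    by (intro sum.cong) (auto simp: e_def)
  also have "\<dots> = 1" using n by (simp add: sum.delta)
  finally have "e \<in> T" using n unfolding T_def S_def sqn_def by (auto simp: PiE_def e_def)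
  then have ne: "T \<noteq> {}" by auto
  obtain x where x: "x \<in> T" and xmax: "\<forall>y\<in>T. qf n K y \<le> qf n K x"
    using continuous_attains_sup[OF cT ne cont_qf] by blast
  show ?thesis
  proof (intro exI conjI allI impI)
    show "sqn n x = 1" using x by (simp add: T_def)
    fix y assume y: "sqn n y = 1"
    define y' where "y' j = (if j < n then y j else 0)" for j
    have "(y j)\<^sup>2 \<le> sqn n y" if "j < n" for j
      unfolding sqn_def using that by (intro member_le_sum) auto
    then have "\<bar>y j\<bar> \<le> 1" if "j < n" for j
      using y that by (metis abs_le_square_iff abs_one one_power2)
    then have "y' \<in> T" unfolding T_def using y
      by (auto simp: S_def y'_def PiE_def abs_le_iff sqn_cong[of n y' y])
    then have "qf n K y' \<le> qf n K x" using xmax by blast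
    moreover have "qf n K y' = qf n K y" by (rule qf_cong) (simp add: y'_def)
    ultimately show "qf n K y \<le> qf n K x" by simp
  qed
qed

lemma rayleigh_le_leading:
  assumes n: "1 \<le> n"
    and sym: "\<And>j k. j < n \<Longrightarrow> k < n \<Longrightarrow> K j k = K k j"
    and v: "unit_leading_eigenvector n K v"
    and u: "sqn n u = 1"
  shows "qf n K u \<le> qf n K v"
proof -
  obtain lam where ev: "\<forall>j<n. (\<Sum>k<n. K j k * v k) = lam * v j"
     and lead: "\<forall>lam'. is_eigenvalue n K lam' \<longrightarrow> lam' \<le> lam"
     and vn: "(\<Sum>j<n. (v j)\<^sup>2) = 1"
    using v unfolding unit_leading_eigenvector_def by blast
  have qv: "qf n K v = lam"
  proof -
    have "qf n K v = (\<Sum>j<n. v j * (\<Sum>k<n. K j k * v k))"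
      unfolding qf_def by (simp add: sum_distrib_left mult_ac)
    also have "\<dots> = (\<Sum>j<n. lam * (v j)\<^sup>2)" using ev by (intro sum.cong) (auto simp: power2_eq_square)
    also have "\<dots> = lam" using vn by (simp add: sum_distrib_left[symmetric])
    finally show ?thesis .
  qed
  obtain x where x1: "sqn n x = 1" and xmax: "\<forall>y. sqn n y = 1 \<longrightarrow> qf n K y \<le> qf n K x"
    using rayleigh_max_exists[OF n] by blast
  define mu where "mu = qf n K x"
  have hom: "qf n K w \<le> mu * sqn n w" for w
  proof (cases "sqn n w = 0")
    case True then show ?thesis by (simp add: qf_zero)
  next
    case False
    then have pos: "0 < sqn n w" using sqn_nonneg[of n w] by simp
    define c where "c = 1 / sqrt (sqn n w)"
    have "sqn n (\<lambda>j. c * w j) = c\<^sup>2 * sqn n w" by (rule sqn_scale)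
    also have "c\<^sup>2 = 1 / sqn n w" using pos by (simp add: c_def power_divide)
    finally have "sqn n (\<lambda>j. c * w j) = 1" using pos by simp
    then have "qf n K (\<lambda>j. c * w j) \<le> mu" using xmax by (simp add: mu_def)
    then have "c\<^sup>2 * qf n K w \<le> mu" by (simp add: qf_scale)
    then have "qf n K w / sqn n w \<le> mu" using pos by (simp add: c_def power_divide)
    then show ?thesis using pos by (simp add: divide_le_eq mult.commute)
  qed
  define r where "r j = (\<Sum>k<n. K j k * x k) - mu * x j" for j
  have key: "(\<Sum>j<n. y j * r j) = 0" for y
  proof -
    have "\<And>t. (2*(\<Sum>j<n. y j * r j))*t + (qf n K y - mu * sqn n y)*t\<^sup>2 \<le> 0"
    proof -
      fix t
      define A where "A = (\<Sum>j<n. y j * (\<Sum>k<n. K j k * x k))"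
      define B where "B = (\<Sum>j<n. y j * x j)"
      have h: "qf n K (\<lambda>j. x j + t * y j) \<le> mu * sqn n (\<lambda>j. x j + t * y j)" by (rule hom)
      have e1: "qf n K (\<lambda>j. x j + t * y j) = mu + 2*t*A + t\<^sup>2 * qf n K y"
        unfolding A_def mu_def by (rule qf_expand[OF sym])
      have e2: "sqn n (\<lambda>j. x j + t * y j) = 1 + 2*t*B + t\<^sup>2 * sqn n y"
        unfolding B_def using sqn_expand[of n x t y] x1 by simp
      have e3: "(\<Sum>j<n. y j * r j) = A - mu * B"
        by (simp add: r_def A_def B_def algebra_simps sum_subtractf sum_distrib_left)
      have "mu + 2*t*A + t\<^sup>2 * qf n K y \<le> mu * (1 + 2*t*B + t\<^sup>2 * sqn n y)"
        using h e1 e2 by simp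
      then show "(2*(\<Sum>j<n. y j * r j))*t + (qf n K y - mu * sqn n y)*t\<^sup>2 \<le> 0"
        unfolding e3 by (simp add: algebra_simps)
    qed
    then show ?thesis using quad_zero_lemma by fastforce
  qed
  have r0: "\<forall>j<n. r j = 0"
  proof -
    have "(\<Sum>j<n. r j * r j) = 0" using key[of r] .
    then have "sqn n r = 0" by (simp add: sqn_def power2_eq_square)
    then show ?thesis using sqn_zero by blast
  qed
  have "is_eigenvalue n K mu"
    unfolding is_eigenvalue_def
  proof (rule exI[of _ x], intro conjI)
    show "\<exists>j<n. x j \<noteq> 0"
    proof (rule ccontr)
      assume "\<not> (\<exists>j<n. x j \<noteq> 0)"
      then have "sqn n x = 0" by (simp add: sqn_def)
      then show False using x1 by simp
    qed
    show "\<forall>j<n. (\<Sum>k<n. K j k * x k) = mu * x j" using r0 by (simp add: r_def)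
  qed
  then have "mu \<le> lam" using lead by blast
  moreover have "qf n K u \<le> mu" using xmax u by (simp add: mu_def)
  ultimately show ?thesis using qv by simp
qed


lemma ln_lower: fixes z :: real assumes "\<bar>z\<bar> \<le> 1/2" shows "-z - 2*z\<^sup>2 \<le> ln (1 - z)"
proof (cases "0 \<le> z")
  case True then show ?thesis using ln_one_minus_pos_lower_bound[of z] assms by simp
next
  case False
  have "(-z) - (-z)\<^sup>2 \<le> ln (1 + (-z))" using ln_one_plus_pos_lower_bound[of "-z"] assms False by simp
  then have "-z - z*z \<le> ln (1 - z)" by (simp add: power2_eq_square)
  moreover have "0 \<le> z*z" by simp
  ultimately show ?thesis unfolding power2_eq_square by linarith
qed

lemma mgf_scalar: fixes u :: real assumes "\<bar>u\<bar> \<le> 1/4"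
  shows "exp (-u) * (1 / sqrt (1 - 2*u)) \<le> exp (4*u\<^sup>2)"
proof -
  have a: "0 < 1 - 2*u" using assms by simp
  have l: "-2*u - 2*(2*u)\<^sup>2 \<le> ln (1 - 2*u)" using ln_lower[of "2*u"] assms by simp
  have "sqrt (1 - 2*u) = exp (ln (1 - 2*u) / 2)"
    using a by (simp add: exp_divide_power_eq ln_sqrt[symmetric]) 
  then have "exp (-u) * (1 / sqrt (1 - 2*u)) = exp (-u - ln (1 - 2*u)/2)"
    by (simp add: exp_diff)
  also have "\<dots> \<le> exp (4*u\<^sup>2)" using l by (simp add: power2_eq_square)
  finally show ?thesis .
qed


definition Qf :: "nat \<Rightarrow> nat \<Rightarrow> (nat \<Rightarrow> real) \<Rightarrow> (nat \<Rightarrow> real) \<Rightarrow> (nat \<times> nat \<Rightarrow> real) \<Rightarrow> real" where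
  "Qf n p \<sigma> x g = (\<Sum>i<p. (\<sigma> i)\<^sup>2 * ((\<Sum>j<n. x j * g (i,j))\<^sup>2 - sqn n x))"

lemma coord_meas_NS[measurable]:
  "i < p \<Longrightarrow> j < n \<Longrightarrow> (\<lambda>\<omega>. \<omega> (i,j)) \<in> borel_measurable (noise_space n p)"
  unfolding NS_def'
  using measurable_component_singleton[of "(i,j)" "{..<p} \<times> {..<n}" "\<lambda>_. SN"]
  by (simp add: measurable_def)

lemma row_sum_meas:
  "i < p \<Longrightarrow> (\<lambda>\<omega>. \<Sum>j<n. x j * \<omega> (i,j)) \<in> borel_measurable (noise_space n p)"
  by (intro borel_measurable_sum borel_measurable_times borel_measurable_const coord_meas_NS) auto

lemma row_reindex:
  fixes x :: "nat \<Rightarrow> real"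
  shows "(\<Sum>k\<in>(\<lambda>j. (i,j)) ` {..<n}. x (snd k) * \<omega> k) = (\<Sum>j<n. x j * \<omega> (i,j))"
    and "(\<Sum>k\<in>(\<lambda>j. (i,j)) ` {..<n}. (x (snd k))\<^sup>2) = sqn n x"
  by (subst sum.reindex, simp add: inj_on_def, simp add: sqn_def)+

lemma row_mgf:
  assumes i: "i < p" and u: "\<bar>t * sqn n x\<bar> \<le> 1/4"
  shows "(\<integral>\<^sup>+\<omega>. ennreal (exp (t * ((\<Sum>j<n. x j * \<omega> (i,j))\<^sup>2 - sqn n x))) \<partial>noise_space n p)
         \<le> ennreal (exp (4 * (t * sqn n x)\<^sup>2))"
proof -
  let ?J = "(\<lambda>j. (i,j)) ` {..<n}"
  have JI: "?J \<subseteq> {..<p} \<times> {..<n}" using i by auto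
  have a: "0 < 1 - 2 * t * sqn n x" using u by (simp add: abs_le_iff)
  have m: "(\<lambda>\<omega>. \<Sum>j<n. x j * \<omega> (i,j)) \<in> borel_measurable (noise_space n p)"
    by (rule row_sum_meas[OF i])
  have "(\<integral>\<^sup>+\<omega>. ennreal (exp (t * ((\<Sum>j<n. x j * \<omega> (i,j))\<^sup>2 - sqn n x))) \<partial>noise_space n p)
      = (\<integral>\<^sup>+\<omega>. ennreal (exp (- (t * sqn n x))) * ennreal (exp (t * (\<Sum>j<n. x j * \<omega> (i,j))\<^sup>2)) \<partial>noise_space n p)"
    by (intro nn_integral_cong) (simp add: ennreal_mult[symmetric] exp_add[symmetric] algebra_simps)
  also have "\<dots> = ennreal (exp (- (t * sqn n x))) * (\<integral>\<^sup>+\<omega>. ennreal (exp (t * (\<Sum>j<n. x j * \<omega> (i,j))\<^sup>2)) \<partial>noise_space n p)"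
    by (rule nn_integral_cmult) (use m in measurable)
  also have "(\<integral>\<^sup>+\<omega>. ennreal (exp (t * (\<Sum>j<n. x j * \<omega> (i,j))\<^sup>2)) \<partial>noise_space n p)
      = (\<integral>\<^sup>+\<omega>. ennreal (exp (t * (\<Sum>k\<in>?J. x (snd k) * \<omega> k)\<^sup>2)) \<partial>PiM ({..<p} \<times> {..<n}) (\<lambda>_. SN))"
    by (simp add: row_reindex NS_def')
  also have "\<dots> = ennreal (1/sqrt (1 - 2*t*(\<Sum>k\<in>?J. (x (snd k))\<^sup>2)))"
    by (rule lin_comb_mgf_sq[OF _ JI]) (use a in \<open>simp_all add: row_reindex\<close>)
  also have "\<dots> = ennreal (1/sqrt (1 - 2*(t * sqn n x)))" by (simp add: row_reindex mult.assoc)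
  also have "ennreal (exp (- (t * sqn n x))) * ennreal (1/sqrt (1 - 2*(t * sqn n x)))
      = ennreal (exp (- (t * sqn n x)) * (1/sqrt (1 - 2*(t * sqn n x))))"
    by (rule ennreal_mult[symmetric]) (use a in auto)
  also have "\<dots> \<le> ennreal (exp (4 * (t * sqn n x)\<^sup>2))"
    by (rule ennreal_leI, rule mgf_scalar[OF u])
  finally show ?thesis .
qed


lemma Q_mgf:
  assumes n: "1 \<le> n" and p: "1 \<le> p" and small: "\<And>i. i < p \<Longrightarrow> \<bar>t * (\<sigma> i)\<^sup>2 * sqn n x\<bar> \<le> 1/4"
  shows "(\<integral>\<^sup>+g. ennreal (exp (t * Qf n p \<sigma> x g)) \<partial>noise_space n p)
         \<le> ennreal (exp (4 * t\<^sup>2 * (sqn n x)\<^sup>2 * (\<Sum>i<p. (\<sigma> i)^4)))"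
proof -
  define F where "F i y = exp (t * (\<sigma> i)\<^sup>2 * (y\<^sup>2 - sqn n x))" for i y
  have Fm: "F i \<in> borel_measurable borel" for i unfolding F_def by measurable
  have "exp (t * Qf n p \<sigma> x g) = (\<Prod>i<p. F i (\<Sum>j<n. x j * g (i,j)))" for g
    unfolding Qf_def F_def by (simp add: sum_distrib_left exp_sum mult.assoc)
  then have "(\<integral>\<^sup>+g. ennreal (exp (t * Qf n p \<sigma> x g)) \<partial>noise_space n p)
      = (\<integral>\<^sup>+g. (\<Prod>i<p. ennreal (F i (\<Sum>j<n. x j * g (i,j)))) \<partial>noise_space n p)"
    by (simp add: prod_ennreal F_def)
  also have "\<dots> = (\<Prod>i<p. \<integral>\<^sup>+g. ennreal (F i (\<Sum>j<n. x j * g (i,j))) \<partial>noise_space n p)"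
    by (rule block_indep_nn[OF n p Fm])
  also have "\<dots> \<le> (\<Prod>i<p. ennreal (exp (4 * (t * (\<sigma> i)\<^sup>2 * sqn n x)\<^sup>2)))"
  proof (rule prod_mono_ennreal)
    fix i assume "i \<in> {..<p}"
    then have i: "i < p" by simp
    show "(\<integral>\<^sup>+g. ennreal (F i (\<Sum>j<n. x j * g (i,j))) \<partial>noise_space n p)
          \<le> ennreal (exp (4 * (t * (\<sigma> i)\<^sup>2 * sqn n x)\<^sup>2))"
      unfolding F_def using row_mgf[OF i, of "t * (\<sigma> i)\<^sup>2" n x] small[OF i]
      by (simp add: mult.assoc)
  qed
  also have "\<dots> = ennreal (exp (4 * t\<^sup>2 * (sqn n x)\<^sup>2 * (\<Sum>i<p. (\<sigma> i)^4)))"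
    by (simp add: prod_ennreal exp_sum[symmetric] sum_distrib_left power_mult_distrib
                  power2_eq_square[of "(\<sigma> _)\<^sup>2"] mult_ac)
  finally show ?thesis .
qed


definition inner_n :: "nat \<Rightarrow> (nat \<Rightarrow> real) \<Rightarrow> (nat \<Rightarrow> real) \<Rightarrow> real" where
  "inner_n n a b = (\<Sum>j<n. a j * b j)"

definition Wf :: "nat \<Rightarrow> (nat \<times> nat \<Rightarrow> real) \<Rightarrow> nat \<Rightarrow> (nat \<Rightarrow> real) \<Rightarrow> real" where
  "Wf n g i a = (\<Sum>j<n. a j * g (i,j))"

definition zf :: "nat \<Rightarrow> (nat \<Rightarrow> real) \<Rightarrow> (nat \<Rightarrow> real) \<Rightarrow> (nat \<times> nat \<Rightarrow> real) \<Rightarrow> nat \<Rightarrow> real" where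
  "zf p \<mu> \<sigma> g j = (\<Sum>i<p. \<mu> i * \<sigma> i * g (i,j))"

definition tau :: "nat \<Rightarrow> (nat \<Rightarrow> real) \<Rightarrow> real" where
  "tau p \<sigma> = (\<Sum>i<p. (\<sigma> i)\<^sup>2)"

definition bff :: "nat \<Rightarrow> nat \<Rightarrow> (nat \<Rightarrow> real) \<Rightarrow> (nat \<times> nat \<Rightarrow> real) \<Rightarrow> (nat \<Rightarrow> real) \<Rightarrow> (nat \<Rightarrow> real) \<Rightarrow> real" where
  "bff n p \<sigma> g a b = (\<Sum>i<p. (\<sigma> i)\<^sup>2 * Wf n g i a * Wf n g i b) - tau p \<sigma> * inner_n n a b"

definition alphaf :: "nat \<Rightarrow> (nat \<Rightarrow> real) \<Rightarrow> (nat \<Rightarrow> real) \<Rightarrow> real" where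
  "alphaf n l a = (\<Sum>j<n. l j * a j)"

lemma inner_sqn: "inner_n n a a = sqn n a"
  unfolding inner_n_def sqn_def by (simp add: power2_eq_square)

lemma inner_comm: "inner_n n a b = inner_n n b a"
  unfolding inner_n_def by (simp add: mult.commute)

lemma CS: "\<bar>inner_n n a b\<bar> \<le> sqrt (sqn n a) * sqrt (sqn n b)"
proof -
  have "(inner_n n a b)\<^sup>2 \<le> sqn n a * sqn n b"
    unfolding inner_n_def sqn_def by (rule Cauchy_Schwarz_ineq_sum)
  then have "sqrt ((inner_n n a b)\<^sup>2) \<le> sqrt (sqn n a * sqn n b)" by (rule real_sqrt_le_mono)
  then show ?thesis by (simp add: real_sqrt_mult)
qed

lemma qf_gram:
  "qf n (gram p \<mu> l \<sigma> g) a = (\<Sum>i<p. (\<mu> i)\<^sup>2) * (alphaf n l a)\<^sup>2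
      + 2 * alphaf n l a * inner_n n a (zf p \<mu> \<sigma> g) + bff n p \<sigma> g a a + tau p \<sigma> * sqn n a"
proof -
  have row: "(\<Sum>j<n. a j * data_entry \<mu> l \<sigma> g j i) = \<mu> i * alphaf n l a + \<sigma> i * Wf n g i a" for i
    unfolding data_entry_def alphaf_def Wf_def
    by (simp add: algebra_simps sum.distrib sum_distrib_left)
  have "qf n (gram p \<mu> l \<sigma> g) a = (\<Sum>i<p. (\<Sum>j<n. a j * data_entry \<mu> l \<sigma> g j i) * (\<Sum>k<n. a k * data_entry \<mu> l \<sigma> g k i))"
    unfolding qf_def gram_def
    by (simp add: sum_distrib_left sum_distrib_right mult_ac) (subst sum.swap, rule sum.cong, simp, subst sum.swap, simp)
  also have "\<dots> = (\<Sum>i<p. (\<mu> i * alphaf n l a + \<sigma> i * Wf n g i a)\<^sup>2)"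
    by (simp add: row power2_eq_square)
  also have "\<dots> = (\<Sum>i<p. (\<mu> i)\<^sup>2) * (alphaf n l a)\<^sup>2 + 2 * alphaf n l a * (\<Sum>i<p. \<mu> i * \<sigma> i * Wf n g i a)
       + (\<Sum>i<p. (\<sigma> i)\<^sup>2 * Wf n g i a * Wf n g i a)"
    by (simp add: power2_eq_square algebra_simps sum.distrib sum_distrib_left sum_distrib_right)
  also have "(\<Sum>i<p. \<mu> i * \<sigma> i * Wf n g i a) = inner_n n a (zf p \<mu> \<sigma> g)"
    unfolding Wf_def inner_n_def zf_def
    by (simp add: sum_distrib_left mult_ac) (rule sum.swap)
  also have "(\<Sum>i<p. (\<sigma> i)\<^sup>2 * Wf n g i a * Wf n g i a) = bff n p \<sigma> g a a + tau p \<sigma> * sqn n a"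
    by (simp add: bff_def inner_sqn)
  finally show ?thesis by simp
qed


lemma Wf_lin: "Wf n g i (\<lambda>j. c * x j + y j) = c * Wf n g i x + Wf n g i y"
  unfolding Wf_def by (simp add: algebra_simps sum.distrib sum_distrib_left)
lemma inner_lin: "inner_n n (\<lambda>j. c * x j + y j) w = c * inner_n n x w + inner_n n y w"
  unfolding inner_n_def by (simp add: algebra_simps sum.distrib sum_distrib_left)
lemma inner_lin2: "inner_n n w (\<lambda>j. c * x j + y j) = c * inner_n n w x + inner_n n w y"
  unfolding inner_n_def by (simp add: algebra_simps sum.distrib sum_distrib_left)
lemma bff_sym: "bff n p \<sigma> g a b = bff n p \<sigma> g b a"
  unfolding bff_def by (simp add: mult_ac inner_comm)

lemma bff_lin: "bff n p \<sigma> g (\<lambda>j. c * x j + y j) (\<lambda>j. c * x j + y j)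
   = c\<^sup>2 * bff n p \<sigma> g x x + 2 * c * bff n p \<sigma> g x y + bff n p \<sigma> g y y"
proof -
  have "bff n p \<sigma> g (\<lambda>j. c * x j + y j) (\<lambda>j. c * x j + y j)
     = c\<^sup>2 * bff n p \<sigma> g x x + c * bff n p \<sigma> g x y + c * bff n p \<sigma> g y x + bff n p \<sigma> g y y"
    unfolding bff_def Wf_lin inner_lin inner_lin2
    by (simp add: algebra_simps sum.distrib sum_distrib_left power2_eq_square)
  then show ?thesis by (simp add: bff_sym[of n p \<sigma> g y x])
qed

lemma main_det:
  fixes v :: "nat \<Rightarrow> real"
  assumes n: "1 \<le> n" and l: "\<forall>j<n. l j = -1 \<or> l j = 1"
    and v: "unit_leading_eigenvector n (gram p \<mu> l \<sigma> g) v"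
    and Lam: "\<And>a b. \<bar>bff n p \<sigma> g a b\<bar> \<le> Lam * sqrt (sqn n a) * sqrt (sqn n b)"
    and Lam0: "0 \<le> Lam"
  defines "u \<equiv> (\<lambda>j. l j / sqrt n)"
  defines "c \<equiv> inner_n n u v"
  defines "s \<equiv> sqrt (1 - c\<^sup>2)"
  shows "(\<Sum>i<p. (\<mu> i)\<^sup>2) * n * s\<^sup>2 \<le> 4 * s * (sqrt n * sqrt (sqn n (zf p \<mu> \<sigma> g)) + Lam)"
    and "c\<^sup>2 \<le> 1"
proof -
  define N2 where "N2 = (\<Sum>i<p. (\<mu> i)\<^sup>2)"
  define Z where "Z = sqrt (sqn n (zf p \<mu> \<sigma> g))"
  define z where "z = zf p \<mu> \<sigma> g"
  have npos: "0 < sqrt (real n)" using n by simp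
  have l2: "(l j)\<^sup>2 = 1" if "j < n" for j using l that by auto
  have su: "sqn n u = 1"
  proof -
    have "sqn n u = (\<Sum>j<n. (l j)\<^sup>2 / n)" unfolding sqn_def u_def by (simp add: power_divide)
    also have "\<dots> = (\<Sum>j<n. 1 / n)" by (intro sum.cong) (auto simp: l2)
    also have "\<dots> = 1" using n by simp
    finally show ?thesis .
  qed
  have vn: "sqn n v = 1" using v unfolding unit_leading_eigenvector_def sqn_def by simp
  have au: "alphaf n l u = sqrt n"
  proof -
    have "alphaf n l u = (\<Sum>j<n. (l j)\<^sup>2 / sqrt n)" unfolding alphaf_def u_def by (simp add: power2_eq_square)
    also have "\<dots> = (\<Sum>j<n. 1 / sqrt n)" by (intro sum.cong) (auto simp: l2)
    also have "\<dots> = n / sqrt n" by simp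
    also have "\<dots> = sqrt n" using npos by (metis real_div_sqrt of_nat_0_le_iff)
    finally show ?thesis .
  qed
  have av: "alphaf n l v = sqrt n * c"
  proof -
    have "c = alphaf n l v / sqrt n" unfolding c_def inner_n_def alphaf_def u_def
      by (simp add: sum_divide_distrib)
    then show ?thesis using npos by simp
  qed
  define d where "d = (\<lambda>j. v j - c * u j)"
  have vd: "v = (\<lambda>j. c * u j + d j)" by (simp add: d_def)
  have sd: "sqn n d = 1 - c\<^sup>2"
  proof -
    have "sqn n d = sqn n (\<lambda>j. v j + (-c) * u j)" by (simp add: d_def)
    also have "\<dots> = sqn n v + 2*(-c)*(\<Sum>j<n. u j * v j) + (-c)\<^sup>2 * sqn n u" by (rule sqn_expand)
    also have "(\<Sum>j<n. u j * v j) = c" by (simp add: c_def inner_n_def)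
    finally show ?thesis using su vn by (simp add: power2_eq_square)
  qed
  show c1: "c\<^sup>2 \<le> 1" using sd sqn_nonneg[of n d] by simp
  have ss: "s\<^sup>2 = 1 - c\<^sup>2" unfolding s_def using c1 by simp
  have s0: "0 \<le> s" unfolding s_def using c1 by simp
  have s1: "s \<le> 1" unfolding s_def using c1 by (simp add: real_sqrt_le_1_iff)
  have ac: "\<bar>c\<bar> \<le> 1" using c1 by (simp add: abs_square_le_1)
  have sqd: "sqrt (sqn n d) = s" using sd s_def by simp
  have sym: "\<And>j k. j < n \<Longrightarrow> k < n \<Longrightarrow> gram p \<mu> l \<sigma> g j k = gram p \<mu> l \<sigma> g k j"
    unfolding gram_def by (simp add: mult.commute)
  have R: "qf n (gram p \<mu> l \<sigma> g) u \<le> qf n (gram p \<mu> l \<sigma> g) v"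
    by (rule rayleigh_le_leading[OF n sym v su])
  have ivz: "inner_n n v z = c * inner_n n u z + inner_n n d z" by (subst vd, rule inner_lin)
  have bvv: "bff n p \<sigma> g v v = c\<^sup>2 * bff n p \<sigma> g u u + 2 * c * bff n p \<sigma> g u d + bff n p \<sigma> g d d"
    using bff_lin[of n p \<sigma> g c u d] vd by simp
  from R have "N2 * n + 2 * sqrt n * inner_n n u z + bff n p \<sigma> g u u
      \<le> N2 * (sqrt n * c)\<^sup>2 + 2 * (sqrt n * c) * inner_n n v z + bff n p \<sigma> g v v"
    unfolding qf_gram au av su vn N2_def z_def by simp
  then have key: "N2 * n * (1 - c\<^sup>2) \<le> 2 * sqrt n * ((c\<^sup>2 - 1) * inner_n n u z + c * inner_n n d z)
        + ((c\<^sup>2 - 1) * bff n p \<sigma> g u u + 2 * c * bff n p \<sigma> g u d + bff n p \<sigma> g d d)"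
    unfolding ivz bvv by (simp add: algebra_simps power2_eq_square)
  have i1: "\<bar>inner_n n u z\<bar> \<le> Z" using CS[of n u z] su by (simp add: Z_def z_def)
  have i2: "\<bar>inner_n n d z\<bar> \<le> s * Z" using CS[of n d z] sqd by (simp add: Z_def z_def)
  have b1: "\<bar>bff n p \<sigma> g u u\<bar> \<le> Lam" using Lam[of u u] su by simp
  have b2: "\<bar>bff n p \<sigma> g u d\<bar> \<le> Lam * s" using Lam[of u d] su sqd by simp
  have b3: "\<bar>bff n p \<sigma> g d d\<bar> \<le> Lam * s\<^sup>2" using Lam[of d d] sqd by (simp add: power2_eq_square)
  have Z0: "0 \<le> Z" by (simp add: Z_def sqn_nonneg)
  have t1: "(c\<^sup>2 - 1) * inner_n n u z + c * inner_n n d z \<le> 2 * s * Z"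
  proof -
    have "(c\<^sup>2 - 1) * inner_n n u z \<le> s\<^sup>2 * Z"
    proof -
      have "(c\<^sup>2 - 1) * inner_n n u z \<le> \<bar>(c\<^sup>2 - 1) * inner_n n u z\<bar>" by simp
      also have "\<dots> = s\<^sup>2 * \<bar>inner_n n u z\<bar>" by (simp add: abs_mult ss c1)
      also have "\<dots> \<le> s\<^sup>2 * Z" by (rule mult_left_mono[OF i1]) simp
      finally show ?thesis .
    qed
    moreover have "s\<^sup>2 * Z \<le> s * Z" using s0 s1 Z0 by (simp add: power2_eq_square mult_right_mono mult_left_le_one_le)
    moreover have "c * inner_n n d z \<le> s * Z"
    proof -
      have "c * inner_n n d z \<le> \<bar>c\<bar> * \<bar>inner_n n d z\<bar>" by (simp add: abs_mult[symmetric])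
      also have "\<dots> \<le> 1 * (s * Z)" by (rule mult_mono[OF ac i2]) auto
      finally show ?thesis by simp
    qed
    ultimately show ?thesis by linarith
  qed
  have t2: "(c\<^sup>2 - 1) * bff n p \<sigma> g u u + 2 * c * bff n p \<sigma> g u d + bff n p \<sigma> g d d \<le> 4 * s * Lam"
  proof -
    have "(c\<^sup>2 - 1) * bff n p \<sigma> g u u \<le> s\<^sup>2 * Lam"
    proof -
      have "(c\<^sup>2 - 1) * bff n p \<sigma> g u u \<le> \<bar>(c\<^sup>2 - 1) * bff n p \<sigma> g u u\<bar>" by simp
      also have "\<dots> = s\<^sup>2 * \<bar>bff n p \<sigma> g u u\<bar>" by (simp add: abs_mult ss c1)
      also have "\<dots> \<le> s\<^sup>2 * Lam" by (rule mult_left_mono[OF b1]) simp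
      finally show ?thesis .
    qed
    moreover have "2 * c * bff n p \<sigma> g u d \<le> 2 * (s * Lam)"
    proof -
      have "c * bff n p \<sigma> g u d \<le> \<bar>c\<bar> * \<bar>bff n p \<sigma> g u d\<bar>" by (simp add: abs_mult[symmetric])
      also have "\<dots> \<le> 1 * (Lam * s)" by (rule mult_mono[OF ac b2]) auto
      finally show ?thesis by (simp add: mult_ac)
    qed
    moreover have "bff n p \<sigma> g d d \<le> s\<^sup>2 * Lam" using b3 by (simp add: mult_ac)
    moreover have "s\<^sup>2 * Lam \<le> s * Lam" using s0 s1 Lam0 by (simp add: power2_eq_square mult_right_mono mult_left_le_one_le)
    ultimately show ?thesis by linarith
  qed
  have "N2 * n * s\<^sup>2 \<le> 2 * sqrt n * (2 * s * Z) + 4 * s * Lam"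
  proof -
    have "2 * sqrt n * ((c\<^sup>2 - 1) * inner_n n u z + c * inner_n n d z) \<le> 2 * sqrt n * (2 * s * Z)"
      using t1 by (intro mult_left_mono) auto
    then show ?thesis using key t2 unfolding ss[symmetric] by linarith
  qed
  then show "N2 * n * s\<^sup>2 \<le> 4 * s * (sqrt n * Z + Lam)" by (simp add: algebra_simps)
qed


lemma card_bound:
  fixes w :: "nat \<Rightarrow> real"
  assumes "\<And>j. j \<in> A \<Longrightarrow> 1 / n \<le> (w j)\<^sup>2" and "A \<subseteq> {..<n}"
  shows "real (card A) / n \<le> sqn n w"
proof -
  have fA: "finite A" using assms(2) finite_subset by blast
  have "real (card A) / n = (\<Sum>j\<in>A. 1 / n)" by simp
  also have "\<dots> \<le> (\<Sum>j\<in>A. (w j)\<^sup>2)" by (rule sum_mono) (use assms in auto)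
  also have "\<dots> \<le> (\<Sum>j<n. (w j)\<^sup>2)" by (rule sum_mono2) (use assms in auto)
  finally show ?thesis by (simp add: sqn_def)
qed

lemma miscl_le:
  fixes v :: "nat \<Rightarrow> real"
  assumes n: "1 \<le> n" and l: "\<forall>j<n. l j = -1 \<or> l j = 1"
    and vn: "sqn n v = 1" and c1: "c\<^sup>2 \<le> 1"
  defines "u \<equiv> (\<lambda>j. l j / sqrt n)"
  assumes c_def: "c = inner_n n u v"
  shows "miscl_rate n l (\<lambda>j. sgn (v j)) \<le> 2 * (1 - c\<^sup>2)"
proof -
  have npos: "0 < sqrt (real n)" using n by simp
  have l2: "(l j)\<^sup>2 = 1" if "j < n" for j using l that by auto
  have su: "sqn n u = 1"
  proof -
    have "sqn n u = (\<Sum>j<n. (l j)\<^sup>2 / n)" unfolding sqn_def u_def by (simp add: power_divide)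
    also have "\<dots> = (\<Sum>j<n. 1 / n)" by (intro sum.cong) (auto simp: l2)
    also have "\<dots> = 1" using n by simp
    finally show ?thesis .
  qed
  have uv: "(\<Sum>j<n. u j * v j) = c" by (simp add: c_def inner_n_def)
  have sq_n: "(1 / sqrt n)\<^sup>2 = 1 / n" by (simp add: power_divide)
  define A where "A = {j\<in>{..<n}. l j \<noteq> sgn (v j)}"
  define B where "B = {j\<in>{..<n}. l j \<noteq> - sgn (v j)}"
  have ac: "\<bar>c\<bar> \<le> 1" using c1 by (simp add: abs_square_le_1)
  have M: "miscl_rate n l (\<lambda>j. sgn (v j)) = min (real (card A)) (real (card B)) / n"
    unfolding miscl_rate_def A_def B_def ..
  show ?thesis
  proof (cases "0 \<le> c")
    case True
    have "real (card A) / n \<le> sqn n (\<lambda>j. v j + (-1) * u j)"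
    proof (rule card_bound)
      fix j assume j: "j \<in> A"
      then have jn: "j < n" and lj: "l j \<noteq> sgn (v j)" by (auto simp: A_def)
      show "1 / n \<le> (v j + (-1) * u j)\<^sup>2"
      proof (cases "l j = 1")
        case True
        then have "v j \<le> 0" using lj by (cases "v j > 0") auto
        then have "1 / sqrt n \<le> \<bar>v j + (-1) * u j\<bar>" using True by (simp add: u_def)
        then have "(1 / sqrt n)\<^sup>2 \<le> (v j + (-1) * u j)\<^sup>2"
          by (metis abs_le_square_iff abs_of_nonneg npos less_eq_real_def zero_le_divide_1_iff)
        then show ?thesis using sq_n by simp
      next
        case False
        then have lm: "l j = -1" using l jn by auto
        then have "v j \<ge> 0" using lj by (cases "v j < 0") auto
        then have "1 / sqrt n \<le> \<bar>v j + (-1) * u j\<bar>" using lm by (simp add: u_def)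
        then have "(1 / sqrt n)\<^sup>2 \<le> (v j + (-1) * u j)\<^sup>2"
          by (metis abs_le_square_iff abs_of_nonneg npos less_eq_real_def zero_le_divide_1_iff)
        then show ?thesis using sq_n by simp
      qed
    qed (auto simp: A_def)
    also have "sqn n (\<lambda>j. v j + (-1) * u j) = 2 - 2 * c"
      using sqn_expand[of n v "-1" u] vn su uv by simp
    also have "\<dots> \<le> 2 * (1 - c\<^sup>2)"
      using True ac by (simp add: power2_eq_square mult_left_le_one_le)
    finally have "real (card A) / n \<le> 2 * (1 - c\<^sup>2)" .
    moreover have "min (real (card A)) (real (card B)) / n \<le> real (card A) / n"
      by (intro divide_right_mono) auto
    ultimately show ?thesis using M by simp
  next
    case False
    have "real (card B) / n \<le> sqn n (\<lambda>j. v j + 1 * u j)"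
    proof (rule card_bound)
      fix j assume j: "j \<in> B"
      then have jn: "j < n" and lj: "l j \<noteq> - sgn (v j)" by (auto simp: B_def)
      show "1 / n \<le> (v j + 1 * u j)\<^sup>2"
      proof (cases "l j = 1")
        case True
        then have "v j \<ge> 0" using lj by (cases "v j < 0") auto
        then have "1 / sqrt n \<le> \<bar>v j + 1 * u j\<bar>" using True by (simp add: u_def)
        then have "(1 / sqrt n)\<^sup>2 \<le> (v j + 1 * u j)\<^sup>2"
          by (metis abs_le_square_iff abs_of_nonneg npos less_eq_real_def zero_le_divide_1_iff)
        then show ?thesis using sq_n by simp
      next
        case False
        then have lm: "l j = -1" using l jn by auto
        then have "v j \<le> 0" using lj by (cases "v j > 0") auto
        then have "1 / sqrt n \<le> \<bar>v j + 1 * u j\<bar>" using lm by (simp add: u_def)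
        then have "(1 / sqrt n)\<^sup>2 \<le> (v j + 1 * u j)\<^sup>2"
          by (metis abs_le_square_iff abs_of_nonneg npos less_eq_real_def zero_le_divide_1_iff)
        then show ?thesis using sq_n by simp
      qed
    qed (auto simp: B_def)
    also have "sqn n (\<lambda>j. v j + 1 * u j) = 2 + 2 * c"
      using sqn_expand[of n v 1 u] vn su uv by simp
    also have "\<dots> \<le> 2 * (1 - c\<^sup>2)"
    proof -
      have "(-c)*(-c) \<le> 1*(-c)" by (rule mult_right_mono) (use False ac in auto)
      then have "c\<^sup>2 \<le> - c" by (simp add: power2_eq_square)
      then show ?thesis by simp
    qed
    finally have "real (card B) / n \<le> 2 * (1 - c\<^sup>2)" .
    moreover have "min (real (card A)) (real (card B)) / n \<le> real (card B) / n"
      by (intro divide_right_mono) auto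
    ultimately show ?thesis using M by simp
  qed
qed

lemma miscl_bound:
  fixes v :: "nat \<Rightarrow> real"
  assumes n: "1 \<le> n" and l: "\<forall>j<n. l j = -1 \<or> l j = 1"
    and v: "unit_leading_eigenvector n (gram p \<mu> l \<sigma> g) v"
    and Lam: "\<And>a b. \<bar>bff n p \<sigma> g a b\<bar> \<le> Lam * sqrt (sqn n a) * sqrt (sqn n b)"
    and Lam0: "0 \<le> Lam"
    and N2: "0 < (\<Sum>i<p. (\<mu> i)\<^sup>2)"
  shows "miscl_rate n l (\<lambda>j. sgn (v j))
     \<le> 8 * (sqrt n * sqrt (sqn n (zf p \<mu> \<sigma> g)) + Lam) / (n * (\<Sum>i<p. (\<mu> i)\<^sup>2))"
proof -
  define u where "u = (\<lambda>j. l j / sqrt n)"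
  define c where "c = inner_n n u v"
  define s where "s = sqrt (1 - c\<^sup>2)"
  define N2 where "N2 = (\<Sum>i<p. (\<mu> i)\<^sup>2)"
  define X where "X = sqrt n * sqrt (sqn n (zf p \<mu> \<sigma> g)) + Lam"
  have X0: "0 \<le> X" using Lam0 by (simp add: X_def sqn_nonneg)
  have md: "N2 * n * s\<^sup>2 \<le> 4 * s * X" and c1: "c\<^sup>2 \<le> 1"
    using main_det[OF n l v Lam Lam0] unfolding N2_def X_def s_def c_def u_def by auto
  have vn: "sqn n v = 1" using v unfolding unit_leading_eigenvector_def sqn_def by simp
  have M: "miscl_rate n l (\<lambda>j. sgn (v j)) \<le> 2 * s\<^sup>2"
    using miscl_le[OF n l vn c1 c_def[unfolded u_def]] c1 by (simp add: s_def)
  have s0: "0 \<le> s" and s1: "s \<le> 1" using c1 by (auto simp: s_def real_sqrt_le_1_iff)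
  have N2p: "0 < N2 * n" using N2 n by (simp add: N2_def)
  have "2 * s\<^sup>2 \<le> 8 * X / (N2 * n)"
  proof (cases "s = 0")
    case True then show ?thesis using X0 N2p by simp
  next
    case False
    then have sp: "0 < s" using s0 by simp
    have "N2 * n * s \<le> 4 * X" using md sp by (simp add: power2_eq_square mult_ac)
    then have "s \<le> 4 * X / (N2 * n)" using N2p by (simp add: le_divide_eq mult.commute)
    moreover have "2 * s\<^sup>2 \<le> 2 * s" using s0 s1 by (simp add: power2_eq_square mult_left_le_one_le)
    ultimately show ?thesis by simp
  qed
  then show ?thesis using M unfolding N2_def X_def by (simp add: mult.commute)
qed


definition Bm :: "nat \<Rightarrow> nat \<Rightarrow> (nat \<Rightarrow> real) \<Rightarrow> (nat \<times> nat \<Rightarrow> real) \<Rightarrow> nat \<Rightarrow> nat \<Rightarrow> real" where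
  "Bm n p \<sigma> g j k = (\<Sum>i<p. (\<sigma> i)\<^sup>2 * g (i,j) * g (i,k)) - (if j = k then tau p \<sigma> else 0)"

lemma bff_qf: "bff n p \<sigma> g a a = qf n (Bm n p \<sigma> g) a"
proof -
  have 1: "(\<Sum>j<n. \<Sum>k<n. a j * (\<Sum>i<p. (\<sigma> i)\<^sup>2 * g (i,j) * g (i,k)) * a k)
        = (\<Sum>i<p. (\<sigma> i)\<^sup>2 * Wf n g i a * Wf n g i a)"
    unfolding Wf_def
    by (simp add: sum_distrib_left sum_distrib_right mult_ac)
       (subst sum.swap, rule sum.cong, simp, subst sum.swap, simp)
  have 2: "(\<Sum>j<n. \<Sum>k<n. a j * (if j = k then tau p \<sigma> else 0) * a k) = tau p \<sigma> * inner_n n a a"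
  proof -
    have "(\<Sum>k<n. a j * (if j = k then tau p \<sigma> else 0) * a k) = (\<Sum>k<n. if k = j then a j * tau p \<sigma> * a k else 0)" for j
      by (intro sum.cong) auto
    then have "(\<Sum>j<n. \<Sum>k<n. a j * (if j = k then tau p \<sigma> else 0) * a k) = (\<Sum>j<n. a j * tau p \<sigma> * a j)"
      by (simp add: sum.delta)
    then show ?thesis unfolding inner_n_def by (simp add: sum_distrib_left mult_ac)
  qed
  show ?thesis
    unfolding qf_def Bm_def bff_def
    by (simp add: right_diff_distrib left_diff_distrib sum_subtractf 1 2)
qed

lemma bff_cong: "(\<And>j. j < n \<Longrightarrow> a j = a' j) \<Longrightarrow> (\<And>j. j < n \<Longrightarrow> b j = b' j) \<Longrightarrow>
    bff n p \<sigma> g a b = bff n p \<sigma> g a' b'"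
  unfolding bff_def Wf_def inner_n_def by simp

lemma bff_scale: "bff n p \<sigma> g (\<lambda>j. t * a j) (\<lambda>j. r * b j) = t * r * bff n p \<sigma> g a b"
  unfolding bff_def Wf_def inner_n_def by (simp add: sum_distrib_left algebra_simps)

lemma bff_polar: "4 * bff n p \<sigma> g a b = bff n p \<sigma> g (\<lambda>j. a j + b j) (\<lambda>j. a j + b j)
     - bff n p \<sigma> g (\<lambda>j. a j - b j) (\<lambda>j. a j - b j)"
proof -
  have e1: "bff n p \<sigma> g (\<lambda>j. a j + b j) (\<lambda>j. a j + b j) = bff n p \<sigma> g a a + 2 * bff n p \<sigma> g a b + bff n p \<sigma> g b b"
    using bff_lin[of n p \<sigma> g 1 a b] by simp
  have e2: "bff n p \<sigma> g (\<lambda>j. -1 * b j + a j) (\<lambda>j. -1 * b j + a j) = bff n p \<sigma> g b b - 2 * bff n p \<sigma> g b a + bff n p \<sigma> g a a"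
    using bff_lin[of n p \<sigma> g "-1" b a] by simp
  have e3: "(\<lambda>j. -1 * b j + a j) = (\<lambda>j. a j - b j)" by auto
  show ?thesis using e1 e2 bff_sym[of n p \<sigma> g b a] unfolding e3 by simp
qed

lemma sqn_add_le: "sqn n (\<lambda>j. a j + b j) \<le> 2 * sqn n a + 2 * sqn n b"
proof -
  have "(a j + b j)\<^sup>2 \<le> 2 * (a j)\<^sup>2 + 2 * (b j)\<^sup>2" for j
    using sum_squares_ge_zero[of "a j - b j" 0]
    by (simp add: power2_eq_square algebra_simps)
  then have "(\<Sum>j<n. (a j + b j)\<^sup>2) \<le> (\<Sum>j<n. 2 * (a j)\<^sup>2 + 2 * (b j)\<^sup>2)" by (rule sum_mono)
  also have "\<dots> = 2 * (\<Sum>j<n. (a j)\<^sup>2) + 2 * (\<Sum>j<n. (b j)\<^sup>2)" by (simp add: sum.distrib sum_distrib_left)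
  finally show ?thesis unfolding sqn_def .
qed

lemma sqn_pm: "sqn n (\<lambda>j. a j + b j) + sqn n (\<lambda>j. a j - b j) = 2 * sqn n a + 2 * sqn n b"
  unfolding sqn_def by (simp add: sum.distrib[symmetric] sum_distrib_left power2_eq_square algebra_simps)

lemma bff_bilinear_bound:
  assumes L0: "0 \<le> L" and Lq: "\<And>a. sqn n a = 1 \<Longrightarrow> \<bar>bff n p \<sigma> g a a\<bar> \<le> L"
  shows "\<bar>bff n p \<sigma> g a b\<bar> \<le> L * sqrt (sqn n a) * sqrt (sqn n b)"
proof -
  have quad: "\<bar>bff n p \<sigma> g w w\<bar> \<le> L * sqn n w" for w
  proof (cases "sqn n w = 0")
    case True
    then have "bff n p \<sigma> g w w = bff n p \<sigma> g (\<lambda>_. 0) (\<lambda>_. 0)"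
      by (intro bff_cong) (auto dest: sqn_zero)
    then show ?thesis using L0 sqn_nonneg[of n w] by (simp add: bff_def Wf_def inner_n_def)
  next
    case False
    then have pos: "0 < sqn n w" using sqn_nonneg[of n w] by simp
    define c where "c = 1 / sqrt (sqn n w)"
    have "sqn n (\<lambda>j. c * w j) = c\<^sup>2 * sqn n w" by (rule sqn_scale)
    also have "c\<^sup>2 = 1 / sqn n w" using pos by (simp add: c_def power_divide)
    finally have "sqn n (\<lambda>j. c * w j) = 1" using pos by simp
    then have "\<bar>bff n p \<sigma> g (\<lambda>j. c * w j) (\<lambda>j. c * w j)\<bar> \<le> L" by (rule Lq)
    then have "c\<^sup>2 * \<bar>bff n p \<sigma> g w w\<bar> \<le> L" by (simp add: bff_scale abs_mult power2_eq_square)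
    then have "\<bar>bff n p \<sigma> g w w\<bar> / sqn n w \<le> L" using pos by (simp add: c_def power_divide)
    then show ?thesis using pos by (simp add: divide_le_eq mult.commute)
  qed
  have pol: "\<bar>bff n p \<sigma> g a b\<bar> \<le> L * (sqn n a + sqn n b) / 2" for a b
  proof -
    have "4 * \<bar>bff n p \<sigma> g a b\<bar> \<le> \<bar>bff n p \<sigma> g (\<lambda>j. a j + b j) (\<lambda>j. a j + b j)\<bar>
          + \<bar>bff n p \<sigma> g (\<lambda>j. a j - b j) (\<lambda>j. a j - b j)\<bar>"
      using bff_polar[of n p \<sigma> g a b] by linarith
    also have "\<dots> \<le> L * sqn n (\<lambda>j. a j + b j) + L * sqn n (\<lambda>j. a j - b j)"
      by (intro add_mono quad)
    also have "\<dots> = L * (2 * sqn n a + 2 * sqn n b)"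
      using sqn_pm[of n a b] by (metis distrib_left)
    finally show ?thesis by (simp add: algebra_simps)
  qed
  show ?thesis
  proof (cases "sqn n a = 0 \<or> sqn n b = 0")
    case True
    then have "bff n p \<sigma> g a b = 0"
    proof
      assume "sqn n a = 0"
      then have "bff n p \<sigma> g a b = bff n p \<sigma> g (\<lambda>j. 0 * a j) b" by (intro bff_cong) (auto dest: sqn_zero)
      also have "\<dots> = 0" using bff_scale[of n p \<sigma> g 0 a 1 b] by simp
      finally show ?thesis .
    next
      assume "sqn n b = 0"
      then have "bff n p \<sigma> g a b = bff n p \<sigma> g a (\<lambda>j. 0 * b j)" by (intro bff_cong) (auto dest: sqn_zero)
      also have "\<dots> = 0" using bff_scale[of n p \<sigma> g 1 a 0 b] by simp
      finally show ?thesis .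
    qed
    then show ?thesis using L0 by (simp add: sqn_nonneg)
  next
    case False
    then have pa: "0 < sqn n a" and pb: "0 < sqn n b" using sqn_nonneg[of n a] sqn_nonneg[of n b] by auto
    define A where "A = sqrt (sqn n a)"
    define B where "B = sqrt (sqn n b)"
    have A0: "0 < A" and B0: "0 < B" using pa pb by (auto simp: A_def B_def)
    define t where "t = sqrt (B / A)"
    have t0: "0 < t" using A0 B0 by (simp add: t_def)
    have tt: "t\<^sup>2 = B / A" using A0 B0 by (simp add: t_def)
    have "bff n p \<sigma> g a b = bff n p \<sigma> g (\<lambda>j. t * a j) (\<lambda>j. (1/t) * b j)"
      using bff_scale[of n p \<sigma> g t a "1/t" b] t0 by simp
    then have "\<bar>bff n p \<sigma> g a b\<bar> \<le> L * (sqn n (\<lambda>j. t * a j) + sqn n (\<lambda>j. (1/t) * b j)) / 2"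
      using pol by simp
    also have "sqn n (\<lambda>j. t * a j) = t\<^sup>2 * A\<^sup>2" using pa by (simp add: sqn_scale A_def)
    also have "sqn n (\<lambda>j. (1/t) * b j) = B\<^sup>2 / t\<^sup>2"
      using pb sqn_scale[of n "1/t" b] by (simp add: B_def power_divide)
    also have "t\<^sup>2 * A\<^sup>2 + B\<^sup>2 / t\<^sup>2 = 2 * A * B"
      unfolding tt using A0 B0 by (simp add: field_simps power2_eq_square)
    finally show ?thesis by (simp add: A_def B_def)
  qed
qed


definition netK :: "nat \<Rightarrow> (nat \<Rightarrow> int) set" where
  "netK n = {k \<in> PiE {..<n} (\<lambda>_. {-(4*int n)..4*int n}).
              (\<Sum>j<n. \<bar>k j\<bar>) \<le> 4*int n \<and> (\<Sum>j<n. (k j)\<^sup>2) \<le> 27*int n}"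

definition xk :: "nat \<Rightarrow> (nat \<Rightarrow> int) \<Rightarrow> nat \<Rightarrow> real" where
  "xk n k j = real_of_int (k j) / (3 * sqrt n)"

lemma finite_netK: "finite (netK n)"
  unfolding netK_def by (rule finite_subset[of _ "PiE {..<n} (\<lambda>_. {-(4*int n)..4*int n})"]) (auto intro: finite_PiE)

lemma sqn_xk: assumes n: "1 \<le> n" and k: "k \<in> netK n" shows "sqn n (xk n k) \<le> 3"
proof -
  have "sqn n (xk n k) = (\<Sum>j<n. real_of_int ((k j)\<^sup>2)) / (9 * n)"
    unfolding sqn_def xk_def using n by (simp add: power_divide power_mult_distrib sum_divide_distrib)
  also have "(\<Sum>j<n. real_of_int ((k j)\<^sup>2)) = real_of_int (\<Sum>j<n. (k j)\<^sup>2)" by simp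
  also have "\<dots> \<le> 27 * n" using k unfolding netK_def by (simp only: mem_Collect_eq) linarith
  finally show ?thesis using n by (simp add: divide_le_eq)
qed

lemma sum_abs_le_sqrt:
  fixes a :: "nat \<Rightarrow> real"
  assumes n: "1 \<le> n" and a: "sqn n a = 1"
  shows "(\<Sum>j<n. \<bar>a j\<bar>) \<le> sqrt n"
proof -
  have sn: "0 < sqrt (real n)" using n by simp
  have "\<bar>a j\<bar> \<le> (1 + n * (a j)\<^sup>2) / (2 * sqrt n)" for j
  proof -
    have "0 \<le> (1 - sqrt n * \<bar>a j\<bar>)\<^sup>2" by simp
    then have "2 * sqrt n * \<bar>a j\<bar> \<le> 1 + (sqrt n)\<^sup>2 * (a j)\<^sup>2"
      by (simp add: power2_eq_square algebra_simps)
    then have "2 * sqrt n * \<bar>a j\<bar> \<le> 1 + n * (a j)\<^sup>2" by simp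
    then show ?thesis using sn by (simp add: le_divide_eq mult_ac)
  qed
  then have "(\<Sum>j<n. \<bar>a j\<bar>) \<le> (\<Sum>j<n. (1 + n * (a j)\<^sup>2) / (2 * sqrt n))" by (rule sum_mono)
  also have "\<dots> = (n + n * sqn n a) / (2 * sqrt n)"
    by (simp add: sum_divide_distrib[symmetric] sum.distrib sum_distrib_left sqn_def)
  also have "\<dots> = n / sqrt n" using a by simp
  also have "\<dots> = sqrt n" by (metis real_div_sqrt of_nat_0_le_iff)
  finally show ?thesis .
qed

lemma net_approx:
  fixes a :: "nat \<Rightarrow> real"
  assumes n: "1 \<le> n" and a: "sqn n a = 1"
  shows "\<exists>k\<in>netK n. sqn n (\<lambda>j. a j - xk n k j) \<le> 1/36"
proof -
  have sn: "0 < sqrt (real n)" using n by simp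
  define k where "k = restrict (\<lambda>j. round (3 * sqrt n * a j)) {..<n}"
  have kj: "k j = round (3 * sqrt n * a j)" if "j < n" for j using that by (simp add: k_def)
  have e: "(a j - xk n k j)\<^sup>2 \<le> 1 / (36 * n)" if j: "j < n" for j
  proof -
    have "a j - xk n k j = (3 * sqrt n * a j - of_int (round (3 * sqrt n * a j))) / (3 * sqrt n)"
      using sn j by (simp add: xk_def kj field_simps)
    then have "\<bar>a j - xk n k j\<bar> = \<bar>of_int (round (3 * sqrt n * a j)) - 3 * sqrt n * a j\<bar> / (3 * sqrt n)"
      using sn by (simp add: abs_minus_commute)
    also have "\<dots> \<le> (1/2) / (3 * sqrt n)"
      by (intro divide_right_mono of_int_round_abs_le) (use sn in auto)
    finally have h: "\<bar>a j - xk n k j\<bar> \<le> 1 / (6 * sqrt n)" by simp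
    have "(a j - xk n k j)\<^sup>2 = \<bar>a j - xk n k j\<bar>\<^sup>2" by simp
    also have "\<dots> \<le> (1 / (6 * sqrt n))\<^sup>2" by (rule power_mono[OF h]) simp
    also have "\<dots> = 1 / (36 * n)" by (simp add: power_divide power_mult_distrib)
    finally show ?thesis .
  qed
  have E: "sqn n (\<lambda>j. a j - xk n k j) \<le> 1/36"
  proof -
    have "sqn n (\<lambda>j. a j - xk n k j) \<le> (\<Sum>j<n. 1 / (36 * n))" unfolding sqn_def by (rule sum_mono) (use e in simp)
    also have "\<dots> = 1/36" using n by simp
    finally show ?thesis .
  qed
  have kb: "real_of_int \<bar>k j\<bar> \<le> 3 * sqrt n * \<bar>a j\<bar> + 1/2" if "j < n" for j
  proof -
    have "\<bar>of_int (round (3 * sqrt n * a j)) - 3 * sqrt n * a j\<bar> \<le> 1/2" by (rule of_int_round_abs_le)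
    then have "\<bar>of_int (round (3 * sqrt n * a j)) :: real\<bar> \<le> \<bar>3 * sqrt n * a j\<bar> + 1/2" by linarith
    then show ?thesis using that sn by (simp add: kj abs_mult)
  qed
  have s1: "real_of_int (\<Sum>j<n. \<bar>k j\<bar>) \<le> 4 * n"
  proof -
    have "real_of_int (\<Sum>j<n. \<bar>k j\<bar>) = (\<Sum>j<n. real_of_int \<bar>k j\<bar>)" by simp
    also have "\<dots> \<le> (\<Sum>j<n. 3 * sqrt n * \<bar>a j\<bar> + 1/2)" by (rule sum_mono) (use kb in simp)
    also have "\<dots> = 3 * sqrt n * (\<Sum>j<n. \<bar>a j\<bar>) + n/2" by (simp add: sum.distrib sum_distrib_left)
    also have "\<dots> \<le> 3 * sqrt n * sqrt n + n/2"
    proof -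
      have "3 * sqrt n * (\<Sum>j<n. \<bar>a j\<bar>) \<le> 3 * sqrt n * sqrt n"
        by (rule mult_left_mono[OF sum_abs_le_sqrt[OF n a]]) simp
      then show ?thesis by simp
    qed
    also have "\<dots> \<le> 4 * n" by (simp add: mult.assoc)
    finally show ?thesis .
  qed
  then have s1': "(\<Sum>j<n. \<bar>k j\<bar>) \<le> 4 * int n" by linarith
  have s2: "real_of_int (\<Sum>j<n. (k j)\<^sup>2) \<le> 27 * n"
  proof -
    have "sqn n (xk n k) \<le> 3"
    proof -
      have "sqn n (xk n k) = sqn n (\<lambda>j. a j + (- (a j - xk n k j)))" by simp
      also have "\<dots> \<le> 2 * sqn n a + 2 * sqn n (\<lambda>j. - (a j - xk n k j))" by (rule sqn_add_le)
      also have "sqn n (\<lambda>j. - (a j - xk n k j)) = sqn n (\<lambda>j. a j - xk n k j)" by (simp add: sqn_def power2_commute)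
      finally show ?thesis using E a by simp
    qed
    moreover have "sqn n (xk n k) = real_of_int (\<Sum>j<n. (k j)\<^sup>2) / (9 * n)"
      unfolding sqn_def xk_def using n by (simp add: power_divide power_mult_distrib sum_divide_distrib)
    ultimately show ?thesis using n by (simp add: divide_le_eq)
  qed
  then have s2': "(\<Sum>j<n. (k j)\<^sup>2) \<le> 27 * int n" by linarith
  have kPi: "k \<in> PiE {..<n} (\<lambda>_. {-(4*int n)..4*int n})"
  proof -
    have kabs: "\<bar>k j\<bar> \<le> 4 * int n" if "j < n" for j
    proof -
      have "\<bar>k j\<bar> \<le> (\<Sum>j<n. \<bar>k j\<bar>)" by (rule member_le_sum) (use that in auto)
      then show ?thesis using s1' by simp
    qed
    have "- (4 * int n) \<le> k j \<and> k j \<le> 4 * int n" if "j < n" for j using kabs[OF that] by linarith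
    then show ?thesis by (auto simp: k_def PiE_def extensional_def)
  qed
  have "k \<in> netK n" unfolding netK_def using kPi s1' s2' by simp
  then show ?thesis using E by blast
qed

lemma qf_neg: "qf n (\<lambda>j k. - K j k) a = - qf n K a"
  unfolding qf_def by (simp add: sum_negf)

lemma net_bound:
  assumes n: "1 \<le> n" and beta: "\<And>k. k \<in> netK n \<Longrightarrow> \<bar>bff n p \<sigma> g (xk n k) (xk n k)\<bar> \<le> beta"
  shows "\<bar>bff n p \<sigma> g a b\<bar> \<le> (3 * beta) * sqrt (sqn n a) * sqrt (sqn n b)"
proof -
  obtain xp where xp1: "sqn n xp = 1" and xpm: "\<forall>y. sqn n y = 1 \<longrightarrow> qf n (Bm n p \<sigma> g) y \<le> qf n (Bm n p \<sigma> g) xp"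
    using rayleigh_max_exists[OF n] by blast
  obtain xm where xm1: "sqn n xm = 1" and xmm: "\<forall>y. sqn n y = 1 \<longrightarrow> qf n (\<lambda>j k. - Bm n p \<sigma> g j k) y \<le> qf n (\<lambda>j k. - Bm n p \<sigma> g j k) xm"
    using rayleigh_max_exists[OF n] by blast
  define L where "L = max (bff n p \<sigma> g xp xp) (- bff n p \<sigma> g xm xm)"
  have Lq: "\<bar>bff n p \<sigma> g y y\<bar> \<le> L" if "sqn n y = 1" for y
    using xpm xmm that unfolding L_def bff_qf qf_neg by fastforce
  have L0: "0 \<le> L" using Lq[OF xp1] by simp
  have bil: "\<bar>bff n p \<sigma> g a b\<bar> \<le> L * sqrt (sqn n a) * sqrt (sqn n b)" for a b
    by (rule bff_bilinear_bound[OF L0 Lq])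
  have unit: "\<bar>bff n p \<sigma> g y y\<bar> \<le> beta + 11/18 * L" if y1: "sqn n y = 1" for y
  proof -
    obtain k where k: "k \<in> netK n" and ek: "sqn n (\<lambda>j. y j - xk n k j) \<le> 1/36"
      using net_approx[OF n y1] by blast
    define x where "x = xk n k"
    define e where "e = (\<lambda>j. y j - x j)"
    have ye: "y = (\<lambda>j. 1 * x j + e j)" by (simp add: e_def)
    have "bff n p \<sigma> g y y = 1\<^sup>2 * bff n p \<sigma> g x x + 2 * 1 * bff n p \<sigma> g x e + bff n p \<sigma> g e e"
      by (subst (1 2) ye, rule bff_lin)
    then have eq: "bff n p \<sigma> g y y = bff n p \<sigma> g x x + 2 * bff n p \<sigma> g x e + bff n p \<sigma> g e e" by simp
    have se: "sqrt (sqn n e) \<le> 1/6"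
    proof -
      have "sqrt (sqn n e) \<le> sqrt (1/36)" using ek by (simp add: e_def x_def)
      also have "sqrt (1/36::real) = 1/6" by (simp add: real_sqrt_divide)
      finally show ?thesis .
    qed
    have sx: "sqrt (sqn n x) \<le> 7/4"
    proof -
      have "sqrt (sqn n x) \<le> sqrt 3" using sqn_xk[OF n k] by (simp add: x_def)
      also have "sqrt (3::real) \<le> 7/4" by (rule real_le_lsqrt) (auto simp: power2_eq_square)
      finally show ?thesis .
    qed
    have e0: "0 \<le> sqrt (sqn n e)" by (simp add: sqn_nonneg)
    have x0: "0 \<le> sqrt (sqn n x)" by (simp add: sqn_nonneg)
    have b1: "\<bar>bff n p \<sigma> g x x\<bar> \<le> beta" using beta[OF k] by (simp add: x_def)
    have b2: "\<bar>bff n p \<sigma> g x e\<bar> \<le> L * (7/4) * (1/6)"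
    proof -
      have "\<bar>bff n p \<sigma> g x e\<bar> \<le> L * sqrt (sqn n x) * sqrt (sqn n e)" by (rule bil)
      also have "\<dots> \<le> L * (7/4) * (1/6)"
        by (intro mult_mono mult_left_mono sx se) (use L0 x0 e0 in auto)
      finally show ?thesis .
    qed
    have b3: "\<bar>bff n p \<sigma> g e e\<bar> \<le> L * (1/6) * (1/6)"
    proof -
      have "\<bar>bff n p \<sigma> g e e\<bar> \<le> L * sqrt (sqn n e) * sqrt (sqn n e)" by (rule bil)
      also have "\<dots> \<le> L * (1/6) * (1/6)"
        by (intro mult_mono mult_left_mono se) (use L0 e0 in auto)
      finally show ?thesis .
    qed
    show ?thesis using eq b1 b2 b3 by (simp add: abs_le_iff) linarith
  qed
  have "max (bff n p \<sigma> g xp xp) (- bff n p \<sigma> g xm xm) \<le> beta + 11/18 * L"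
    using unit[OF xp1] unit[OF xm1] by (simp add: abs_le_iff)
  then have "L \<le> beta + 11/18 * L" by (simp only: L_def[symmetric])
  then have L3: "L \<le> 3 * beta" using L0 by linarith
  have "\<bar>bff n p \<sigma> g a b\<bar> \<le> L * sqrt (sqn n a) * sqrt (sqn n b)" by (rule bil)
  also have "\<dots> \<le> (3 * beta) * sqrt (sqn n a) * sqrt (sqn n b)"
    by (intro mult_right_mono L3) (auto simp: sqn_nonneg)
  finally show ?thesis .
qed


lemma int_interval_Suc:
  "{- int (Suc m)..int (Suc m)} = insert (int (Suc m)) (insert (- int (Suc m)) {- int m..int m})"
  by auto

lemma geom_sum_int:
  "(\<Sum>t\<in>{- int m..int m}. (1/2::real) ^ nat \<bar>t\<bar>) = 3 - 2 * (1/2) ^ m"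
proof (induction m)
  case 0 then show ?case by simp
next
  case (Suc m)
  have "(\<Sum>t\<in>{- int (Suc m)..int (Suc m)}. (1/2::real) ^ nat \<bar>t\<bar>)
      = (1/2) ^ Suc m + ((1/2) ^ Suc m + (\<Sum>t\<in>{- int m..int m}. (1/2::real) ^ nat \<bar>t\<bar>))"
  proof -
    have nn: "nat (1 + int m) = Suc m" "nat (int m + 1) = Suc m" "nat (- 1 - int m) = 0" by auto
    show ?thesis unfolding int_interval_Suc by (simp add: nn)
  qed
  also have "\<dots> = 3 - 2 * (1/2) ^ Suc m"
  proof -
    have "nat (1 + int m) = Suc m" "nat (int m + 1) = Suc m" by auto
    then show ?thesis using Suc by simp
  qed
  finally show ?case .
qed

lemma exp_sum_int_le: "(\<Sum>t\<in>{- int m..int m}. exp (- real_of_int \<bar>t\<bar>)) \<le> 3"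
proof -
  have "exp (- real_of_int \<bar>t\<bar>) \<le> (1/2::real) ^ nat \<bar>t\<bar>" for t :: int
  proof -
    have "exp (- real_of_int \<bar>t\<bar>) = exp (-1) ^ nat \<bar>t\<bar>"
      by (simp add: exp_of_nat_mult[symmetric])
    also have "\<dots> \<le> (1/2) ^ nat \<bar>t\<bar>"
    proof (rule power_mono)
      have "2 \<le> exp (1::real)" using exp_ge_add_one_self[of 1] by simp
      then show "exp (-1) \<le> (1/2::real)" by (simp add: exp_minus field_simps)
    qed simp
    finally show ?thesis .
  qed
  then have "(\<Sum>t\<in>{- int m..int m}. exp (- real_of_int \<bar>t\<bar>)) \<le> (\<Sum>t\<in>{- int m..int m}. (1/2::real) ^ nat \<bar>t\<bar>)"
    by (intro sum_mono)
  also have "\<dots> \<le> 3" by (simp add: geom_sum_int)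
  finally show ?thesis .
qed

lemma card_netK: "real (card (netK n)) \<le> exp (4 * n) * 3 ^ n"
proof -
  let ?P = "PiE {..<n} (\<lambda>_. {-(4*int n)..4*int n})"
  have fP: "finite ?P" by (intro finite_PiE) auto
  have sub: "netK n \<subseteq> ?P" unfolding netK_def by auto
  have "real (card (netK n)) = (\<Sum>k\<in>netK n. 1)" by simp
  also have "\<dots> \<le> (\<Sum>k\<in>netK n. exp (4 * n) * (\<Prod>j<n. exp (- real_of_int \<bar>k j\<bar>)))"
  proof (rule sum_mono)
    fix k assume k: "k \<in> netK n"
    have "(\<Sum>j<n. \<bar>k j\<bar>) \<le> 4 * int n" using k by (simp add: netK_def)
    then have "real_of_int (\<Sum>j<n. \<bar>k j\<bar>) \<le> 4 * n" by linarith
    then have "0 \<le> 4 * n - (\<Sum>j<n. real_of_int \<bar>k j\<bar>)" by simp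
    then have "1 \<le> exp (4 * n - (\<Sum>j<n. real_of_int \<bar>k j\<bar>))" by simp
    also have "\<dots> = exp (4 * n) * exp (\<Sum>j<n. - real_of_int \<bar>k j\<bar>)"
      by (simp add: exp_add[symmetric] sum_negf)
    also have "exp (\<Sum>j<n. - real_of_int \<bar>k j\<bar>) = (\<Prod>j<n. exp (- real_of_int \<bar>k j\<bar>))"
      by (rule exp_sum) simp
    finally show "1 \<le> exp (4 * n) * (\<Prod>j<n. exp (- real_of_int \<bar>k j\<bar>))" .
  qed
  also have "\<dots> \<le> (\<Sum>k\<in>?P. exp (4 * n) * (\<Prod>j<n. exp (- real_of_int \<bar>k j\<bar>)))"
    by (rule sum_mono2[OF fP sub]) (simp add: prod_nonneg)
  also have "\<dots> = exp (4 * n) * (\<Prod>j<n. \<Sum>t\<in>{-(4*int n)..4*int n}. exp (- real_of_int \<bar>t\<bar>))"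
  proof -
    have "(\<Prod>j<n. \<Sum>t\<in>{-(4*int n)..4*int n}. exp (- real_of_int \<bar>t\<bar>))
        = (\<Sum>k\<in>?P. \<Prod>j<n. exp (- real_of_int \<bar>k j\<bar>))"
      by (rule prod_sum_PiE) auto
    then show ?thesis by (simp add: sum_distrib_left)
  qed
  also have "\<dots> \<le> exp (4 * n) * (\<Prod>j<n. 3)"
  proof (intro mult_left_mono prod_mono conjI)
    fix j
    show "0 \<le> (\<Sum>t\<in>{-(4*int n)..4*int n}. exp (- real_of_int \<bar>t\<bar>))" by (simp add: sum_nonneg)
    show "(\<Sum>t\<in>{-(4*int n)..4*int n}. exp (- real_of_int \<bar>t\<bar>)) \<le> 3"
      using exp_sum_int_le[of "4*n"] by simp
  qed simp
  finally show ?thesis by simp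
qed


lemma Qf_bff: "Qf n p \<sigma> x g = bff n p \<sigma> g x x"
  unfolding Qf_def bff_def Wf_def tau_def
  by (simp add: inner_sqn right_diff_distrib sum_subtractf sum_distrib_right sum_distrib_left power2_eq_square mult_ac)

lemma Qf_meas: "(\<lambda>g. Qf n p \<sigma> x g) \<in> borel_measurable (noise_space n p)"
proof -
  have "(\<lambda>g. \<Sum>i<p. (\<sigma> i)\<^sup>2 * ((\<Sum>j<n. x j * g (i,j))\<^sup>2 - sqn n x)) \<in> borel_measurable (noise_space n p)"
    by (intro borel_measurable_sum borel_measurable_times borel_measurable_diff borel_measurable_power
        borel_measurable_const row_sum_meas) auto
  then show ?thesis unfolding Qf_def .
qed

lemma zf_meas: "j < n \<Longrightarrow> (\<lambda>g. zf p \<mu> \<sigma> g j) \<in> borel_measurable (noise_space n p)"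
  unfolding zf_def
  by (intro borel_measurable_sum borel_measurable_times borel_measurable_const coord_meas_NS) auto

lemma net_mgf:
  assumes n: "1 \<le> n" and p: "1 \<le> p" and k: "k \<in> netK n" and lam: "0 < lam"
    and small: "\<And>i. i < p \<Longrightarrow> lam * (\<sigma> i)\<^sup>2 * 3 \<le> 1/4"
    and s: "s = 1 \<or> s = -1"
  shows "(\<integral>\<^sup>+g. ennreal (exp (s * lam * Qf n p \<sigma> (xk n k) g)) \<partial>noise_space n p)
         \<le> ennreal (exp (36 * lam\<^sup>2 * (\<Sum>i<p. (\<sigma> i)^4)))"
proof -
  define x where "x = xk n k"
  have x3: "sqn n x \<le> 3" using sqn_xk[OF n k] by (simp add: x_def)
  have x0: "0 \<le> sqn n x" by (rule sqn_nonneg)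
  have sm: "\<bar>(s * lam) * (\<sigma> i)\<^sup>2 * sqn n x\<bar> \<le> 1/4" if "i < p" for i
  proof -
    have "\<bar>(s * lam) * (\<sigma> i)\<^sup>2 * sqn n x\<bar> = lam * (\<sigma> i)\<^sup>2 * sqn n x"
      using s lam x0 by (auto simp: abs_mult)
    also have "\<dots> \<le> lam * (\<sigma> i)\<^sup>2 * 3" using x3 lam by (intro mult_left_mono) auto
    finally show ?thesis using small[OF that] by linarith
  qed
  have "(\<integral>\<^sup>+g. ennreal (exp ((s * lam) * Qf n p \<sigma> x g)) \<partial>noise_space n p)
        \<le> ennreal (exp (4 * (s * lam)\<^sup>2 * (sqn n x)\<^sup>2 * (\<Sum>i<p. (\<sigma> i)^4)))"
    by (rule Q_mgf[OF n p sm])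
  also have "\<dots> \<le> ennreal (exp (36 * lam\<^sup>2 * (\<Sum>i<p. (\<sigma> i)^4)))"
  proof -
    have "(sqn n x)\<^sup>2 \<le> 3\<^sup>2" using x3 x0 by (intro power_mono) auto
    moreover have "(s * lam)\<^sup>2 = lam\<^sup>2" using s by (auto simp: power2_eq_square)
    moreover have "0 \<le> (\<Sum>i<p. (\<sigma> i)^4)" by (simp add: sum_nonneg)
    ultimately have "4 * (s * lam)\<^sup>2 * (sqn n x)\<^sup>2 * (\<Sum>i<p. (\<sigma> i)^4) \<le> 4 * lam\<^sup>2 * 9 * (\<Sum>i<p. (\<sigma> i)^4)"
    proof -
      have "lam\<^sup>2 * (sqn n x)\<^sup>2 \<le> lam\<^sup>2 * 9" using \<open>(sqn n x)\<^sup>2 \<le> 3\<^sup>2\<close> by (intro mult_left_mono) auto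
      then show ?thesis using \<open>(s * lam)\<^sup>2 = lam\<^sup>2\<close> \<open>0 \<le> (\<Sum>i<p. (\<sigma> i)^4)\<close>
        by (simp add: mult_right_mono mult.assoc[symmetric] mult.commute[of 4])
    qed
    then show ?thesis by simp
  qed
  finally show ?thesis by (simp add: x_def mult.assoc)
qed


definition Sf :: "nat \<Rightarrow> nat \<Rightarrow> (nat \<Rightarrow> real) \<Rightarrow> real \<Rightarrow> (nat \<times> nat \<Rightarrow> real) \<Rightarrow> real" where
  "Sf n p \<sigma> lam g = (\<Sum>k\<in>netK n. exp (lam * Qf n p \<sigma> (xk n k) g) + exp (- lam * Qf n p \<sigma> (xk n k) g))"

lemma netK_ne: "restrict (\<lambda>_. 0) {..<n} \<in> netK n"
  unfolding netK_def by (auto simp: PiE_def extensional_def)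

lemma exp_pm_ge1: "1 \<le> exp a + exp (- a :: real)"
proof (cases "0 \<le> a")
  case True then have "1 \<le> exp a" by simp
  then show ?thesis by (smt (verit) exp_gt_zero)
next
  case False then have "1 \<le> exp (-a)" by simp
  then show ?thesis by (smt (verit) exp_gt_zero)
qed

lemma Sf_ge1: "1 \<le> Sf n p \<sigma> lam g"
proof -
  let ?f = "\<lambda>k. exp (lam * Qf n p \<sigma> (xk n k) g) + exp (- lam * Qf n p \<sigma> (xk n k) g)"
  have "1 \<le> ?f (restrict (\<lambda>_. 0) {..<n})" using exp_pm_ge1 by (metis mult_minus_left)
  also have "\<dots> \<le> (\<Sum>k\<in>netK n. ?f k)"
    by (rule member_le_sum[OF netK_ne _ finite_netK]) (simp add: add_nonneg_nonneg less_imp_le)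
  finally show ?thesis unfolding Sf_def .
qed

lemma Q_le_lnS:
  assumes k: "k \<in> netK n" and lam: "0 < lam"
  shows "\<bar>Qf n p \<sigma> (xk n k) g\<bar> \<le> ln (Sf n p \<sigma> lam g) / lam"
proof -
  let ?Q = "Qf n p \<sigma> (xk n k) g"
  let ?f = "\<lambda>k. exp (lam * Qf n p \<sigma> (xk n k) g) + exp (- lam * Qf n p \<sigma> (xk n k) g)"
  have "exp (lam * \<bar>?Q\<bar>) \<le> ?f k"
    by (cases "0 \<le> ?Q") (auto simp: abs_if add_increasing add_increasing2 less_imp_le)
  also have "\<dots> \<le> Sf n p \<sigma> lam g" unfolding Sf_def
    by (rule member_le_sum) (auto intro: k finite_netK add_nonneg_nonneg simp: less_imp_le)
  finally have "lam * \<bar>?Q\<bar> \<le> ln (Sf n p \<sigma> lam g)"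
    using Sf_ge1[of n p \<sigma> lam g] by (metis exp_le_cancel_iff exp_ln less_le_trans zero_less_one)
  then show ?thesis using lam by (simp add: le_divide_eq mult.commute)
qed

lemma Sf_meas: "(\<lambda>g. Sf n p \<sigma> lam g) \<in> borel_measurable (noise_space n p)"
  unfolding Sf_def using Qf_meas by measurable

lemma E_Sf:
  assumes n: "1 \<le> n" and p: "1 \<le> p" and lam: "0 < lam"
    and small: "\<And>i. i < p \<Longrightarrow> lam * (\<sigma> i)\<^sup>2 * 3 \<le> 1/4"
  shows "(\<integral>\<^sup>+g. ennreal (Sf n p \<sigma> lam g) \<partial>noise_space n p)
         \<le> ennreal (2 * card (netK n) * exp (36 * lam\<^sup>2 * (\<Sum>i<p. (\<sigma> i)^4)))"
proof -
  define B where "B = exp (36 * lam\<^sup>2 * (\<Sum>i<p. (\<sigma> i)^4))"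
  have pt: "ennreal (Sf n p \<sigma> lam g) = (\<Sum>k\<in>netK n. ennreal (exp (1 * lam * Qf n p \<sigma> (xk n k) g)) + ennreal (exp ((-1) * lam * Qf n p \<sigma> (xk n k) g)))" for g
  proof -
    have "ennreal (Sf n p \<sigma> lam g) = (\<Sum>k\<in>netK n. ennreal (exp (lam * Qf n p \<sigma> (xk n k) g) + exp (- lam * Qf n p \<sigma> (xk n k) g)))"
      unfolding Sf_def by (rule sum_ennreal[symmetric]) (simp add: add_nonneg_nonneg less_imp_le)
    also have "\<dots> = (\<Sum>k\<in>netK n. ennreal (exp (1 * lam * Qf n p \<sigma> (xk n k) g)) + ennreal (exp ((-1) * lam * Qf n p \<sigma> (xk n k) g)))"
      by (intro sum.cong refl) (simp add: ennreal_plus)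
    finally show ?thesis .
  qed
  have "(\<integral>\<^sup>+g. ennreal (Sf n p \<sigma> lam g) \<partial>noise_space n p)
     = (\<integral>\<^sup>+g. (\<Sum>k\<in>netK n. ennreal (exp (1 * lam * Qf n p \<sigma> (xk n k) g)) + ennreal (exp ((-1) * lam * Qf n p \<sigma> (xk n k) g))) \<partial>noise_space n p)"
    by (simp only: pt)
  also have "\<dots> = (\<Sum>k\<in>netK n. (\<integral>\<^sup>+g. ennreal (exp (1 * lam * Qf n p \<sigma> (xk n k) g)) + ennreal (exp ((-1) * lam * Qf n p \<sigma> (xk n k) g)) \<partial>noise_space n p))"
    by (rule nn_integral_sum) (use Qf_meas in measurable)
  also have "\<dots> = (\<Sum>k\<in>netK n. (\<integral>\<^sup>+g. ennreal (exp (1 * lam * Qf n p \<sigma> (xk n k) g)) \<partial>noise_space n p)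
                     + (\<integral>\<^sup>+g. ennreal (exp ((-1) * lam * Qf n p \<sigma> (xk n k) g)) \<partial>noise_space n p))"
    by (intro sum.cong refl nn_integral_add) (use Qf_meas in measurable)
  also have "\<dots> \<le> (\<Sum>k\<in>netK n. ennreal B + ennreal B)"
  proof (rule sum_mono, rule add_mono)
    fix k assume k: "k \<in> netK n"
    show "(\<integral>\<^sup>+g. ennreal (exp (1 * lam * Qf n p \<sigma> (xk n k) g)) \<partial>noise_space n p) \<le> ennreal B"
      using net_mgf[OF n p k lam small, where s=1] by (simp add: B_def)
    show "(\<integral>\<^sup>+g. ennreal (exp ((-1) * lam * Qf n p \<sigma> (xk n k) g)) \<partial>noise_space n p) \<le> ennreal B"
      using net_mgf[OF n p k lam small, where s="-1"] by (simp add: B_def)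
  qed
  also have "\<dots> = ennreal (2 * card (netK n) * B)"
  proof -
    have B0: "0 \<le> B" by (simp add: B_def)
    have eqB: "ennreal B + ennreal B = ennreal (2 * B)" using B0 by (simp add: ennreal_plus[symmetric] del: ennreal_plus)
    have "(\<Sum>k\<in>netK n. ennreal B + ennreal B) = (\<Sum>k\<in>netK n. ennreal (2 * B))" by (simp only: eqB)
    also have "\<dots> = ennreal (\<Sum>k\<in>netK n. 2 * B)" by (rule sum_ennreal) (use B0 in simp)
    also have "\<dots> = ennreal (real (card (netK n)) * (2 * B))" by simp
    finally have "(\<Sum>k\<in>netK n. ennreal B + ennreal B) = ennreal (real (card (netK n)) * (2 * B))" .
    then show ?thesis by (simp add: mult_ac)
  qed
  finally show ?thesis by (simp add: B_def)
qed


lemma ln_tangent: fixes y A :: real assumes "0 < y" "0 < A" shows "ln y \<le> ln A + y / A"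
proof -
  have "ln (y / A) \<le> y / A - 1" by (rule ln_le_minus_one) (use assms in simp)
  then show ?thesis using assms by (simp add: ln_div)
qed

lemma E_lnS:
  assumes n: "1 \<le> n" and p: "1 \<le> p" and lam: "0 < lam"
    and small: "\<And>i. i < p \<Longrightarrow> lam * (\<sigma> i)\<^sup>2 * 3 \<le> 1/4"
  defines "A \<equiv> 2 * (exp (4 * n) * 3 ^ n) * exp (36 * lam\<^sup>2 * (\<Sum>i<p. (\<sigma> i)^4))"
  shows "(\<integral>\<^sup>+g. ennreal (ln (Sf n p \<sigma> lam g)) \<partial>noise_space n p) \<le> ennreal (ln A + 1)"
proof -
  interpret P: prob_space "noise_space n p" by (rule prob_NS)
  define B where "B = exp (36 * lam\<^sup>2 * (\<Sum>i<p. (\<sigma> i)^4))"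
  have B0: "0 < B" by (simp add: B_def)
  have A2: "2 \<le> A"
  proof -
    have "1 * 1 \<le> exp (4 * real n) * (3::real) ^ n" by (rule mult_mono) auto
    moreover have "1 \<le> B" by (simp add: B_def sum_nonneg)
    ultimately have "1 * 1 \<le> (exp (4 * n) * 3 ^ n) * B" by (intro mult_mono) auto
    then show ?thesis unfolding A_def B_def[symmetric] by simp
  qed
  then have A0: "0 < A" by simp
  have lnA: "0 \<le> ln A" using A2 by simp
  have pt: "ennreal (ln (Sf n p \<sigma> lam g)) \<le> ennreal (ln A) + ennreal (1/A) * ennreal (Sf n p \<sigma> lam g)" for g
  proof -
    have S1: "1 \<le> Sf n p \<sigma> lam g" by (rule Sf_ge1)
    have "ln (Sf n p \<sigma> lam g) \<le> ln A + (1/A) * Sf n p \<sigma> lam g"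
      using ln_tangent[of "Sf n p \<sigma> lam g" A] S1 A0 by simp
    then have "ennreal (ln (Sf n p \<sigma> lam g)) \<le> ennreal (ln A + (1/A) * Sf n p \<sigma> lam g)"
      by (rule ennreal_leI)
    also have "\<dots> = ennreal (ln A) + ennreal ((1/A) * Sf n p \<sigma> lam g)"
      by (rule ennreal_plus) (use lnA A0 S1 in auto)
    also have "ennreal ((1/A) * Sf n p \<sigma> lam g) = ennreal (1/A) * ennreal (Sf n p \<sigma> lam g)"
      by (rule ennreal_mult) (use A0 S1 in auto)
    finally show ?thesis .
  qed
  have "(\<integral>\<^sup>+g. ennreal (ln (Sf n p \<sigma> lam g)) \<partial>noise_space n p)
      \<le> (\<integral>\<^sup>+g. ennreal (ln A) + ennreal (1/A) * ennreal (Sf n p \<sigma> lam g) \<partial>noise_space n p)"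
    by (rule nn_integral_mono) (rule pt)
  also have "\<dots> = (\<integral>\<^sup>+g. ennreal (ln A) \<partial>noise_space n p) + (\<integral>\<^sup>+g. ennreal (1/A) * ennreal (Sf n p \<sigma> lam g) \<partial>noise_space n p)"
    by (rule nn_integral_add) (use Sf_meas in measurable)
  also have "(\<integral>\<^sup>+g. ennreal (1/A) * ennreal (Sf n p \<sigma> lam g) \<partial>noise_space n p)
      = ennreal (1/A) * (\<integral>\<^sup>+g. ennreal (Sf n p \<sigma> lam g) \<partial>noise_space n p)"
    by (rule nn_integral_cmult) (use Sf_meas in measurable)
  also have "(\<integral>\<^sup>+g. ennreal (ln A) \<partial>noise_space n p) = ennreal (ln A)"
    by (simp add: P.emeasure_space_1)
  also have "(\<integral>\<^sup>+g. ennreal (Sf n p \<sigma> lam g) \<partial>noise_space n p) \<le> ennreal A"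
  proof -
    have "(\<integral>\<^sup>+g. ennreal (Sf n p \<sigma> lam g) \<partial>noise_space n p) \<le> ennreal (2 * card (netK n) * B)"
      unfolding B_def by (rule E_Sf[OF n p lam small])
    also have "2 * card (netK n) * B \<le> A"
      unfolding A_def B_def[symmetric] using card_netK[of n] B0 by (intro mult_right_mono) auto
    finally show ?thesis by (simp add: ennreal_leI)
  qed
  also have "ennreal (ln A) + ennreal (1/A) * ennreal A = ennreal (ln A + 1)"
  proof -
    have "ennreal (1/A) * ennreal A = ennreal 1" using A0 by (simp add: ennreal_mult[symmetric])
    then show ?thesis using lnA by (metis ennreal_1 ennreal_plus zero_le_one)
  qed
  finally show ?thesis by (simp add: mult_left_mono add_left_mono)
qed

lemma zf_reindex:
  "(\<Sum>k\<in>(\<lambda>i. (i,j)) ` {..<p}. (\<mu> (fst k) * \<sigma> (fst k)) * \<omega> k) = zf p \<mu> \<sigma> \<omega> j"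
  "(\<Sum>k\<in>(\<lambda>i. (i,j)) ` {..<p}. (\<mu> (fst k) * \<sigma> (fst k))\<^sup>2) = (\<Sum>i<p. (\<mu> i * \<sigma> i)\<^sup>2)"
  by (subst sum.reindex, simp add: inj_on_def, simp add: zf_def)+

lemma E_zsq:
  assumes j: "j < n"
  shows "(\<integral>\<^sup>+g. ennreal ((zf p \<mu> \<sigma> g j)\<^sup>2) \<partial>noise_space n p) = ennreal (\<Sum>i<p. (\<mu> i * \<sigma> i)\<^sup>2)"
proof -
  have JI: "(\<lambda>i. (i,j)) ` {..<p} \<subseteq> {..<p} \<times> {..<n}" using j by auto
  have "(\<integral>\<^sup>+g. ennreal ((zf p \<mu> \<sigma> g j)\<^sup>2) \<partial>noise_space n p)
     = (\<integral>\<^sup>+g. ennreal ((\<Sum>k\<in>(\<lambda>i. (i,j)) ` {..<p}. (\<mu> (fst k) * \<sigma> (fst k)) * g k)\<^sup>2) \<partial>PiM ({..<p} \<times> {..<n}) (\<lambda>_. SN))"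
    by (simp add: zf_reindex NS_def')
  also have "\<dots> = ennreal (\<Sum>k\<in>(\<lambda>i. (i,j)) ` {..<p}. (\<mu> (fst k) * \<sigma> (fst k))\<^sup>2)"
    by (rule lin_comb_sq[OF _ JI]) simp
  finally show ?thesis by (simp add: zf_reindex)
qed

lemma E_z:
  fixes \<mu> \<sigma> :: "nat \<Rightarrow> real" and b :: real
  assumes b: "0 < b" and bb: "real n * (\<Sum>i<p. (\<mu> i * \<sigma> i)\<^sup>2) \<le> b\<^sup>2"
  shows "(\<integral>\<^sup>+g. ennreal (sqrt (sqn n (zf p \<mu> \<sigma> g))) \<partial>noise_space n p) \<le> ennreal b"
proof -
  define c where "c = (\<Sum>i<p. (\<mu> i * \<sigma> i)\<^sup>2)"
  have pt: "ennreal (sqrt (sqn n (zf p \<mu> \<sigma> g))) \<le> ennreal (b/2) + ennreal (1/(2*b)) * (\<Sum>j<n. ennreal ((zf p \<mu> \<sigma> g j)\<^sup>2))" for g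
  proof -
    define Z where "Z = sqn n (zf p \<mu> \<sigma> g)"
    have Z0: "0 \<le> Z" by (simp add: Z_def sqn_nonneg)
    have "0 \<le> (sqrt Z - b)\<^sup>2" by simp
    then have "2 * b * sqrt Z \<le> b\<^sup>2 + Z" using Z0 by (simp add: power2_eq_square algebra_simps)
    then have "sqrt Z \<le> b/2 + (1/(2*b)) * Z" using b by (simp add: field_simps power2_eq_square)
    then have "ennreal (sqrt Z) \<le> ennreal (b/2 + (1/(2*b)) * Z)" by (rule ennreal_leI)
    also have "\<dots> = ennreal (b/2) + ennreal ((1/(2*b)) * Z)"
      by (rule ennreal_plus) (use b Z0 in auto)
    also have "ennreal ((1/(2*b)) * Z) = ennreal (1/(2*b)) * ennreal Z"
      by (rule ennreal_mult) (use b Z0 in auto)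
    also have "ennreal Z = (\<Sum>j<n. ennreal ((zf p \<mu> \<sigma> g j)\<^sup>2))"
      unfolding Z_def sqn_def by (rule sum_ennreal[symmetric]) simp
    finally show ?thesis by (simp add: Z_def)
  qed
  define F where "F g = (\<Sum>j<n. ennreal ((zf p \<mu> \<sigma> g j)\<^sup>2))" for g
  have mj: "(\<lambda>g. ennreal ((zf p \<mu> \<sigma> g j)\<^sup>2)) \<in> borel_measurable (noise_space n p)" if "j < n" for j
    by (rule measurable_compose[OF _ measurable_ennreal], rule borel_measurable_power, rule zf_meas[OF that])
  have mF: "F \<in> borel_measurable (noise_space n p)"
    unfolding F_def[abs_def] by (rule borel_measurable_sum) (use mj in simp)
  have "(\<integral>\<^sup>+g. ennreal (sqrt (sqn n (zf p \<mu> \<sigma> g))) \<partial>noise_space n p)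
     \<le> (\<integral>\<^sup>+g. ennreal (b/2) + ennreal (1/(2*b)) * F g \<partial>noise_space n p)"
    unfolding F_def by (rule nn_integral_mono) (rule pt)
  also have "\<dots> = (\<integral>\<^sup>+g. ennreal (b/2) \<partial>noise_space n p) + (\<integral>\<^sup>+g. ennreal (1/(2*b)) * F g \<partial>noise_space n p)"
    by (rule nn_integral_add) (use mF in auto)
  also have "(\<integral>\<^sup>+g. ennreal (1/(2*b)) * F g \<partial>noise_space n p) = ennreal (1/(2*b)) * (\<integral>\<^sup>+g. F g \<partial>noise_space n p)"
    by (rule nn_integral_cmult) (use mF in auto)
  also have "(\<integral>\<^sup>+g. F g \<partial>noise_space n p) = (\<Sum>j<n. \<integral>\<^sup>+g. ennreal ((zf p \<mu> \<sigma> g j)\<^sup>2) \<partial>noise_space n p)"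
    unfolding F_def by (rule nn_integral_sum) (use mj in simp)
  also have "(\<integral>\<^sup>+g. ennreal (b/2) \<partial>noise_space n p) = ennreal (b/2)"
    using prob_space.emeasure_space_1[OF prob_NS] by simp
  also have "(\<Sum>j<n. \<integral>\<^sup>+g. ennreal ((zf p \<mu> \<sigma> g j)\<^sup>2) \<partial>noise_space n p) = ennreal (n * c)"
  proof -
    have "(\<Sum>j<n. \<integral>\<^sup>+g. ennreal ((zf p \<mu> \<sigma> g j)\<^sup>2) \<partial>noise_space n p) = (\<Sum>j<n. ennreal c)"
      by (intro sum.cong refl) (simp add: E_zsq c_def)
    also have "\<dots> = ennreal (\<Sum>j<n. c)" by (rule sum_ennreal) (simp add: c_def sum_nonneg)
    finally show ?thesis by simp
  qed
  also have "ennreal (b/2) + ennreal (1/(2*b)) * ennreal (n * c) = ennreal (b/2 + n * c / (2*b))"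
    using b by (simp add: ennreal_plus[symmetric] ennreal_mult[symmetric] c_def sum_nonneg del: ennreal_plus)
  also have "b/2 + n * c / (2*b) \<le> b"
  proof -
    have "n * c / (2*b) \<le> b\<^sup>2 / (2*b)" using bb b by (intro divide_right_mono) (auto simp: c_def)
    also have "b\<^sup>2 / (2*b) = b/2" using b by (simp add: power2_eq_square)
    finally have "n * c / (2*b) \<le> b/2" .
    then show ?thesis by linarith
  qed
  finally show ?thesis by (simp add: ennreal_leI)
qed


lemma ln_A_bound:
  fixes x t :: real
  assumes x: "1 \<le> x"
  shows "ln (2 * (exp (4 * x) * 3 powr x) * exp t) + 1 \<le> 8 * x + t"
proof -
  have "ln (2 * (exp (4 * x) * 3 powr x) * exp t) = ln 2 + 4 * x + x * ln 3 + t"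
    by (simp add: ln_mult ln_powr)
  moreover have "ln (2::real) \<le> 1" using ln_le_minus_one[of 2] by simp
  moreover have "ln (3::real) \<le> 2"
  proof -
    have "(3::real) \<le> exp 2"
    proof -
      have "1 + 2 \<le> exp (2::real)" by (rule exp_ge_add_one_self)
      then show ?thesis by simp
    qed
    then have "ln 3 \<le> ln (exp (2::real))" by (subst ln_le_cancel_iff) auto
    then show ?thesis by simp
  qed
  moreover have "x * ln 3 \<le> x * 2" by (rule mult_left_mono) (use x \<open>ln 3 \<le> 2\<close> in auto)
  ultimately show ?thesis using x by linarith
qed

lemma final_arith:
  fixes x N2 ss T4 lam :: real
  assumes x: "1 \<le> x" and N2: "0 < N2" and ss: "0 < ss" and T4: "ss ^ 4 \<le> T4"
    and lam: "lam = min (1 / (12 * ss\<^sup>2)) (sqrt x / sqrt T4)"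
  shows "8 * sqrt x / (x * N2) * (sqrt x * ss * sqrt N2)
          + 24 / (lam * x * N2) * (8 * x + 36 * lam\<^sup>2 * T4)
       \<le> 2304 * ((x * sqrt N2 * ss + x * ss\<^sup>2 + sqrt x * sqrt T4) / (x * (sqrt N2)\<^sup>2))"
proof -
  have T0: "0 < T4" using T4 ss by (smt (verit) zero_less_power)
  have sx: "0 < sqrt x" using x by simp
  have sT: "0 < sqrt T4" using T0 by simp
  have l0: "0 < lam" using ss sx sT by (simp add: lam)
  have l1: "lam \<le> 1 / (12 * ss\<^sup>2)" and l2: "lam \<le> sqrt x / sqrt T4" by (simp_all add: lam)
  have inv: "1 / lam \<le> 12 * ss\<^sup>2 + sqrt T4 / sqrt x"
  proof (cases "1 / (12 * ss\<^sup>2) \<le> sqrt x / sqrt T4")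
    case True
    then have "lam = 1 / (12 * ss\<^sup>2)" by (simp add: lam)
    then show ?thesis using sx sT by simp
  next
    case False
    then have "lam = sqrt x / sqrt T4" by (simp add: lam)
    then show ?thesis using ss by simp
  qed
  have lT: "lam * T4 \<le> sqrt x * sqrt T4"
  proof -
    have "lam * T4 \<le> sqrt x / sqrt T4 * T4" using l2 T0 by (intro mult_right_mono) auto
    also have "\<dots> = sqrt x * sqrt T4" using T0 by (metis real_div_sqrt less_eq_real_def times_divide_eq_left mult.commute)
    finally show ?thesis .
  qed
  have sN: "(sqrt N2)\<^sup>2 = N2" using N2 by simp
  define D where "D = x * N2"
  have D0: "0 < D" using x N2 by (simp add: D_def)
  have sxx: "sqrt x * sqrt x = x" using x by simp
  have "8 * sqrt x / (x * N2) * (sqrt x * ss * sqrt N2) = 8 * ((sqrt x * sqrt x) * sqrt N2 * ss) / D"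
    by (simp add: D_def mult_ac)
  then have t1: "8 * sqrt x / (x * N2) * (sqrt x * ss * sqrt N2) = 8 * (x * sqrt N2 * ss) / D"
    by (simp only: sxx)
  have t2: "24 / (lam * x * N2) * (8 * x + 36 * lam\<^sup>2 * T4) = (192 * x * (1/lam) + 864 * (lam * T4)) / D"
    using l0 D0 by (simp add: D_def field_simps power2_eq_square)
  have t3: "192 * x * (1/lam) \<le> 2304 * (x * ss\<^sup>2) + 192 * (sqrt x * sqrt T4)"
  proof -
    have "192 * x * (1/lam) \<le> 192 * x * (12 * ss\<^sup>2 + sqrt T4 / sqrt x)"
      using inv x by (intro mult_left_mono) auto
    also have "\<dots> = 2304 * (x * ss\<^sup>2) + 192 * (x * (sqrt T4 / sqrt x))"
      by (simp add: algebra_simps)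
    also have "x * (sqrt T4 / sqrt x) = sqrt x * sqrt T4"
    proof -
      have "x / sqrt x = sqrt x" using x by (simp add: real_div_sqrt)
      then show ?thesis by (metis times_divide_eq_left times_divide_eq_right mult.commute)
    qed
    finally show ?thesis .
  qed
  have num: "8 * (x * sqrt N2 * ss) + (192 * x * (1/lam) + 864 * (lam * T4))
        \<le> 2304 * (x * sqrt N2 * ss + x * ss\<^sup>2 + sqrt x * sqrt T4)"
  proof -
    have "0 \<le> x * sqrt N2 * ss" using x N2 ss by simp
    moreover have "0 \<le> sqrt x * sqrt T4" using sx sT by simp
    ultimately show ?thesis using t3 lT unfolding distrib_left by linarith
  qed
  have "8 * sqrt x / (x * N2) * (sqrt x * ss * sqrt N2) + 24 / (lam * x * N2) * (8 * x + 36 * lam\<^sup>2 * T4)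
      = (8 * (x * sqrt N2 * ss) + (192 * x * (1/lam) + 864 * (lam * T4))) / D"
    unfolding t1 t2 by (simp add: add_divide_distrib)
  also have "\<dots> \<le> 2304 * (x * sqrt N2 * ss + x * ss\<^sup>2 + sqrt x * sqrt T4) / D"
    using num D0 by (intro divide_right_mono) auto
  also have "\<dots> = 2304 * ((x * sqrt N2 * ss + x * ss\<^sup>2 + sqrt x * sqrt T4) / (x * (sqrt N2)\<^sup>2))"
    by (simp add: sN D_def)
  finally show ?thesis .
qed


lemma sigma_star_ge: "i < p \<Longrightarrow> \<sigma> i \<le> sigma_star p \<sigma>"
  unfolding sigma_star_def by (intro Max_ge) auto

lemma sigma_star_nonneg: "0 \<le> sigma_star p \<sigma>"
  unfolding sigma_star_def by (intro Max_ge) auto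

lemma sigma_star_attained:
  assumes "0 < sigma_star p \<sigma>" shows "\<exists>i<p. \<sigma> i = sigma_star p \<sigma>"
proof -
  have "sigma_star p \<sigma> \<in> insert 0 (\<sigma> ` {..<p})" unfolding sigma_star_def by (intro Max_in) auto
  then show ?thesis using assms by auto
qed

lemma sigma_tilde_sq: "(sigma_tilde p \<sigma>)\<^sup>2 = sqrt (\<Sum>i<p. (\<sigma> i)^4)"
proof -
  define T where "T = (\<Sum>i<p. (\<sigma> i)^4)"
  have T0: "0 \<le> T" by (simp add: T_def sum_nonneg)
  have "((root 4 T)\<^sup>2)\<^sup>2 = T"
    using real_root_pow_pos2[of 4 T] T0 by (simp add: power_mult[symmetric])
  then have "sqrt T = (root 4 T)\<^sup>2" by (intro real_sqrt_unique) auto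
  then show ?thesis by (simp add: sigma_tilde_def T_def)
qed

lemma miscl_le_1: "miscl_rate n l lh \<le> 1"
proof (cases "n = 0")
  case True then show ?thesis by (simp add: miscl_rate_def)
next
  case False
  have "card {j\<in>{..<n}. l j \<noteq> lh j} \<le> card {..<n}" by (intro card_mono) auto
  then have "real (card {j\<in>{..<n}. l j \<noteq> lh j}) \<le> n" by simp
  then have "min (real (card {j\<in>{..<n}. l j \<noteq> lh j})) (real (card {j\<in>{..<n}. l j \<noteq> - lh j})) \<le> n"
    by linarith
  then show ?thesis unfolding miscl_rate_def using False by (simp add: divide_le_eq)
qed

lemma miscl_nonneg: "0 \<le> miscl_rate n l lh"
  unfolding miscl_rate_def by simp

lemma sigma_zero_case:
  assumes n: "1 \<le> n" and l: "\<forall>j<n. l j = -1 \<or> l j = 1"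
    and z: "\<forall>i<p. \<sigma> i = 0"
    and v: "unit_leading_eigenvector n (gram p \<mu> l \<sigma> g) v"
    and N2: "0 < (\<Sum>i<p. (\<mu> i)\<^sup>2)"
  shows "miscl_rate n l (\<lambda>j. sgn (v j)) \<le> 0"
proof -
  have b0: "bff n p \<sigma> g a b = 0" for a b
    unfolding bff_def tau_def using z by simp
  have zz: "sqn n (zf p \<mu> \<sigma> g) = 0" unfolding sqn_def zf_def using z by simp
  have "miscl_rate n l (\<lambda>j. sgn (v j)) \<le> 8 * (sqrt n * sqrt (sqn n (zf p \<mu> \<sigma> g)) + 0) / (n * (\<Sum>i<p. (\<mu> i)\<^sup>2))"
    by (rule miscl_bound[OF n l v _ _ N2]) (simp_all add: b0)
  then show ?thesis using zz by simp
qed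

lemma main_bound:
  fixes vhat :: "(nat \<times> nat \<Rightarrow> real) \<Rightarrow> nat \<Rightarrow> real"
  assumes n: "1 \<le> n" and l: "\<forall>j<n. l j = -1 \<or> l j = 1"
    and s0: "\<forall>i<p. 0 \<le> \<sigma> i"
    and vh: "\<forall>g\<in>space (noise_space n p). unit_leading_eigenvector n (gram p \<mu> l \<sigma> g) (vhat g)"
    and N2: "0 < (\<Sum>i<p. (\<mu> i)\<^sup>2)"
  shows "(\<integral>\<^sup>+g. ennreal (miscl_rate n l (\<lambda>j. sgn (vhat g j))) \<partial>noise_space n p)
     \<le> ennreal (2304 * ((real n * norm2 p \<mu> * sigma_star p \<sigma> + real n * (sigma_star p \<sigma>)\<^sup>2
            + sqrt (real n) * (sigma_tilde p \<sigma>)\<^sup>2) / (real n * (norm2 p \<mu>)\<^sup>2)))"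
proof -
  define N where "N = (\<Sum>i<p. (\<mu> i)\<^sup>2)"
  define ss where "ss = sigma_star p \<sigma>"
  define T4 where "T4 = (\<Sum>i<p. (\<sigma> i)^4)"
  define R where "R = (real n * norm2 p \<mu> * sigma_star p \<sigma> + real n * (sigma_star p \<sigma>)\<^sup>2
            + sqrt (real n) * (sigma_tilde p \<sigma>)\<^sup>2) / (real n * (norm2 p \<mu>)\<^sup>2)"
  have R_eq: "R = (real n * sqrt N * ss + real n * ss\<^sup>2 + sqrt (real n) * sqrt T4) / (real n * (sqrt N)\<^sup>2)"
    by (simp add: R_def norm2_def N_def ss_def sigma_tilde_sq T4_def)
  have ss0: "0 \<le> ss" by (simp add: ss_def sigma_star_nonneg)
  have p: "1 \<le> p"
  proof (rule ccontr)
    assume "\<not> 1 \<le> p" then have "p = 0" by simp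
    then show False using N2 by simp
  qed
  have N0: "0 \<le> N" by (simp add: N_def sum_nonneg)
  have T40: "0 \<le> T4" by (simp add: T4_def sum_nonneg)
  have R0: "0 \<le> R" unfolding R_eq using ss0 N0 T40 by (intro divide_nonneg_nonneg add_nonneg_nonneg) auto
  show ?thesis
  proof (cases "ss = 0")
    case True
    then have z: "\<forall>i<p. \<sigma> i = 0" using sigma_star_ge[of _ p \<sigma>] s0 by (force simp: ss_def)
    have "(\<integral>\<^sup>+g. ennreal (miscl_rate n l (\<lambda>j. sgn (vhat g j))) \<partial>noise_space n p)
        \<le> (\<integral>\<^sup>+g. 0 \<partial>noise_space n p)"
    proof (rule nn_integral_mono)
      fix g assume "g \<in> space (noise_space n p)"
      then have "miscl_rate n l (\<lambda>j. sgn (vhat g j)) \<le> 0"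
        using sigma_zero_case[OF n l z _ N2] vh by blast
      then show "ennreal (miscl_rate n l (\<lambda>j. sgn (vhat g j))) \<le> 0" by (simp add: ennreal_eq_0_iff)
    qed
    then show ?thesis by simp
  next
    case False
    then have ssp: "0 < ss" using ss0 by simp
    obtain i0 where i0: "i0 < p" "\<sigma> i0 = ss" using sigma_star_attained[of p \<sigma>] ssp by (auto simp: ss_def)
    have T4ge: "ss ^ 4 \<le> T4"
    proof -
      have "(\<sigma> i0)^4 \<le> (\<Sum>i<p. (\<sigma> i)^4)"
        by (rule member_le_sum) (use i0 in auto)
      then show ?thesis using i0 by (simp add: T4_def)
    qed
    have T0: "0 < T4" using T4ge ssp by (meson less_le_trans zero_less_power)
    define lam where "lam = min (1 / (12 * ss\<^sup>2)) (sqrt (real n) / sqrt T4)"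
    have lam0: "0 < lam" using ssp T0 n by (simp add: lam_def)
    have small: "lam * (\<sigma> i)\<^sup>2 * 3 \<le> 1/4" if i: "i < p" for i
    proof -
      have si: "(\<sigma> i)\<^sup>2 \<le> ss\<^sup>2" using sigma_star_ge[OF i, of \<sigma>] s0 i by (simp add: ss_def power_mono)
      have "lam * (\<sigma> i)\<^sup>2 * 3 \<le> (1 / (12 * ss\<^sup>2)) * ss\<^sup>2 * 3"
        using lam0 si by (intro mult_right_mono mult_mono) (auto simp: lam_def)
      also have "\<dots> = 1/4" using ssp by simp
      finally show ?thesis .
    qed
    define b where "b = sqrt (real n) * ss * sqrt N"
    have b0: "0 < b" using n ssp N2 by (simp add: b_def N_def)
    have bb: "real n * (\<Sum>i<p. (\<mu> i * \<sigma> i)\<^sup>2) \<le> b\<^sup>2"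
    proof -
      have "(\<Sum>i<p. (\<mu> i * \<sigma> i)\<^sup>2) \<le> (\<Sum>i<p. ss\<^sup>2 * (\<mu> i)\<^sup>2)"
      proof (rule sum_mono)
        fix i assume "i \<in> {..<p}"
        then have si: "(\<sigma> i)\<^sup>2 \<le> ss\<^sup>2" using sigma_star_ge[of i p \<sigma>] s0 by (simp add: ss_def power_mono)
        show "(\<mu> i * \<sigma> i)\<^sup>2 \<le> ss\<^sup>2 * (\<mu> i)\<^sup>2"
          using mult_left_mono[OF si, of "(\<mu> i)\<^sup>2"] by (simp add: power_mult_distrib mult.commute)
      qed
      then have "real n * (\<Sum>i<p. (\<mu> i * \<sigma> i)\<^sup>2) \<le> real n * (ss\<^sup>2 * N)"
        by (intro mult_left_mono) (auto simp: N_def sum_distrib_left)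
      also have "\<dots> = b\<^sup>2" using N2 by (simp add: b_def power_mult_distrib N_def)
      finally show ?thesis .
    qed
    define c1 where "c1 = 8 * sqrt (real n) / (real n * N)"
    define c2 where "c2 = 24 / (lam * real n * N)"
    have c10: "0 \<le> c1" and c20: "0 \<le> c2" using N2 lam0 by (auto simp: c1_def c2_def N_def)
    have pt: "ennreal (miscl_rate n l (\<lambda>j. sgn (vhat g j)))
        \<le> ennreal c1 * ennreal (sqrt (sqn n (zf p \<mu> \<sigma> g))) + ennreal c2 * ennreal (ln (Sf n p \<sigma> lam g))"
      if g: "g \<in> space (noise_space n p)" for g
    proof -
      define beta where "beta = ln (Sf n p \<sigma> lam g) / lam"
      have lnS0: "0 \<le> ln (Sf n p \<sigma> lam g)" using Sf_ge1[of n p \<sigma> lam g] by simp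
      have beta0: "0 \<le> beta" using lnS0 lam0 by (simp add: beta_def)
      have Lam: "\<bar>bff n p \<sigma> g a b\<bar> \<le> (3 * beta) * sqrt (sqn n a) * sqrt (sqn n b)" for a b
      proof (rule net_bound[OF n])
        fix k assume "k \<in> netK n"
        then show "\<bar>bff n p \<sigma> g (xk n k) (xk n k)\<bar> \<le> beta"
          using Q_le_lnS[OF _ lam0, of k n p \<sigma> g] by (simp add: Qf_bff beta_def)
      qed
      have "miscl_rate n l (\<lambda>j. sgn (vhat g j))
          \<le> 8 * (sqrt n * sqrt (sqn n (zf p \<mu> \<sigma> g)) + 3 * beta) / (n * (\<Sum>i<p. (\<mu> i)\<^sup>2))"
        by (rule miscl_bound[OF n l _ Lam _ N2]) (use vh g beta0 in auto)
      also have "\<dots> = c1 * sqrt (sqn n (zf p \<mu> \<sigma> g)) + c2 * ln (Sf n p \<sigma> lam g)"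
        unfolding c1_def c2_def beta_def N_def using lam0 N2 n by (simp add: field_simps)
      finally have "ennreal (miscl_rate n l (\<lambda>j. sgn (vhat g j))) \<le> ennreal (c1 * sqrt (sqn n (zf p \<mu> \<sigma> g)) + c2 * ln (Sf n p \<sigma> lam g))"
        by (rule ennreal_leI)
      also have "\<dots> = ennreal c1 * ennreal (sqrt (sqn n (zf p \<mu> \<sigma> g))) + ennreal c2 * ennreal (ln (Sf n p \<sigma> lam g))"
        using c10 c20 lnS0 by (simp add: ennreal_plus ennreal_mult sqn_nonneg)
      finally show ?thesis .
    qed
    have mZ: "(\<lambda>g. ennreal (sqrt (sqn n (zf p \<mu> \<sigma> g)))) \<in> borel_measurable (noise_space n p)"
    proof -
      have "(\<lambda>g. sqn n (zf p \<mu> \<sigma> g)) \<in> borel_measurable (noise_space n p)"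
        unfolding sqn_def by (intro borel_measurable_sum borel_measurable_power zf_meas) auto
      then show ?thesis by measurable
    qed
    have mS: "(\<lambda>g. ennreal (ln (Sf n p \<sigma> lam g))) \<in> borel_measurable (noise_space n p)"
      using Sf_meas by measurable
    define A where "A = 2 * (exp (4 * n) * 3 ^ n) * exp (36 * lam\<^sup>2 * T4)"
    have "(\<integral>\<^sup>+g. ennreal (miscl_rate n l (\<lambda>j. sgn (vhat g j))) \<partial>noise_space n p)
        \<le> (\<integral>\<^sup>+g. ennreal c1 * ennreal (sqrt (sqn n (zf p \<mu> \<sigma> g))) + ennreal c2 * ennreal (ln (Sf n p \<sigma> lam g)) \<partial>noise_space n p)"
      by (rule nn_integral_mono) (rule pt)
    also have "\<dots> = ennreal c1 * (\<integral>\<^sup>+g. ennreal (sqrt (sqn n (zf p \<mu> \<sigma> g))) \<partial>noise_space n p)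
                    + ennreal c2 * (\<integral>\<^sup>+g. ennreal (ln (Sf n p \<sigma> lam g)) \<partial>noise_space n p)"
      using mZ mS by (simp add: nn_integral_add nn_integral_cmult)
    also have "\<dots> \<le> ennreal c1 * ennreal b + ennreal c2 * ennreal (ln A + 1)"
      by (intro add_mono mult_left_mono E_z[OF b0 bb]) (use E_lnS[OF n p lam0 small] in \<open>simp_all add: A_def T4_def\<close>)
    also have "\<dots> = ennreal (c1 * b + c2 * (ln A + 1))"
    proof -
      have "0 \<le> ln A + 1"
      proof -
        have a1: "1 * 1 \<le> exp (4 * real n) * (3::real) ^ n" by (rule mult_mono) auto
        have a2: "1 \<le> exp (36 * lam\<^sup>2 * T4)" using T40 by simp
        have "1 * 1 \<le> (exp (4 * real n) * (3::real) ^ n) * exp (36 * lam\<^sup>2 * T4)"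
          by (rule mult_mono) (use a1 a2 in auto)
        then have "1 \<le> A" unfolding A_def by simp
        then show ?thesis by simp
      qed
      then show ?thesis using c10 c20 b0 by (simp add: ennreal_plus ennreal_mult)
    qed
    also have "\<dots> \<le> ennreal (2304 * R)"
    proof (rule ennreal_leI)
      have lnA: "ln A + 1 \<le> 8 * real n + 36 * lam\<^sup>2 * T4"
      proof -
        have "(3::real) ^ n = 3 powr (real n)" by (simp add: powr_realpow)
        then show ?thesis using ln_A_bound[of "real n" "36 * lam\<^sup>2 * T4"] n by (simp add: A_def)
      qed
      have "c1 * b + c2 * (ln A + 1) \<le> c1 * b + c2 * (8 * real n + 36 * lam\<^sup>2 * T4)"
        using lnA c20 by (simp add: mult_left_mono)
      also have "\<dots> \<le> 2304 * R"
        unfolding R_eq c1_def c2_def b_def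
        using final_arith[of "real n" N ss T4 lam] n N2 ssp T4ge by (simp add: lam_def N_def mult.assoc)
      finally show "c1 * b + c2 * (ln A + 1) \<le> 2304 * R" .
    qed
    finally show ?thesis by (simp add: R_def)
  qed
qed


lemma int_le_from_nn:
  assumes nonneg: "\<And>g. 0 \<le> f g" and le: "(\<integral>\<^sup>+g. ennreal (f g) \<partial>M) \<le> ennreal B" and B0: "0 \<le> B"
  shows "(\<integral>g. f g \<partial>M) \<le> B"
proof (cases "integrable M f")
  case True
  have "(\<integral>\<^sup>+g. ennreal (f g) \<partial>M) = ennreal (\<integral>g. f g \<partial>M)"
    by (rule nn_integral_eq_integral[OF True]) (simp add: nonneg)
  then have "ennreal (\<integral>g. f g \<partial>M) \<le> ennreal B" using le by simp
  then show ?thesis using B0 by (simp add: ennreal_le_iff)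
next
  case False
  then show ?thesis using B0 by (simp add: not_integrable_integral_eq)
qed

theorem theorem4p1:
  shows "\<exists>C>0. \<forall>(n::nat) (p::nat) (\<mu>::nat \<Rightarrow> real) (l::nat \<Rightarrow> real) (\<sigma>::nat \<Rightarrow> real)
            (vhat::(nat \<times> nat \<Rightarrow> real) \<Rightarrow> nat \<Rightarrow> real).
     n \<ge> 1 \<and> (\<forall>j<n. l j = -1 \<or> l j = 1) \<and> (\<forall>i<p. \<sigma> i \<ge> 0) \<and>
     (\<forall>g\<in>space (noise_space n p). unit_leading_eigenvector n (gram p \<mu> l \<sigma> g) (vhat g)) \<and>
     (\<forall>j<n. (\<lambda>g. vhat g j) \<in> borel_measurable (noise_space n p))
     \<longrightarrow> (\<integral>g. miscl_rate n l (\<lambda>j. sgn (vhat g j)) \<partial>(noise_space n p)) \<le> C * error_bound n p \<mu> \<sigma>"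
proof (intro exI[of _ "2304::real"] conjI allI impI)
  show "(0::real) < 2304" by simp
  fix n p :: nat and \<mu> l \<sigma> :: "nat \<Rightarrow> real" and vhat :: "(nat \<times> nat \<Rightarrow> real) \<Rightarrow> nat \<Rightarrow> real"
  assume H: "n \<ge> 1 \<and> (\<forall>j<n. l j = -1 \<or> l j = 1) \<and> (\<forall>i<p. \<sigma> i \<ge> 0) \<and>
     (\<forall>g\<in>space (noise_space n p). unit_leading_eigenvector n (gram p \<mu> l \<sigma> g) (vhat g)) \<and>
     (\<forall>j<n. (\<lambda>g. vhat g j) \<in> borel_measurable (noise_space n p))"
  then have n: "1 \<le> n" and l: "\<forall>j<n. l j = -1 \<or> l j = 1" and s0: "\<forall>i<p. 0 \<le> \<sigma> i"
    and vh: "\<forall>g\<in>space (noise_space n p). unit_leading_eigenvector n (gram p \<mu> l \<sigma> g) (vhat g)"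
    by auto
  interpret P: prob_space "noise_space n p" by (rule prob_NS)
  define f where "f g = miscl_rate n l (\<lambda>j. sgn (vhat g j))" for g
  have f0: "0 \<le> f g" for g by (simp add: f_def miscl_nonneg)
  have le1: "(\<integral>\<^sup>+g. ennreal (f g) \<partial>noise_space n p) \<le> ennreal 1"
  proof -
    have "(\<integral>\<^sup>+g. ennreal (f g) \<partial>noise_space n p) \<le> (\<integral>\<^sup>+g. ennreal 1 \<partial>noise_space n p)"
      by (rule nn_integral_mono) (simp add: f_def miscl_le_1 ennreal_leI)
    also have "\<dots> = ennreal 1" by (simp add: P.emeasure_space_1)
    finally show ?thesis .
  qed
  have I1: "(\<integral>g. f g \<partial>noise_space n p) \<le> 1" by (rule int_le_from_nn[OF f0 le1]) simp
  show "(\<integral>g. miscl_rate n l (\<lambda>j. sgn (vhat g j)) \<partial>noise_space n p) \<le> 2304 * error_bound n p \<mu> \<sigma>"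
  proof (cases "norm2 p \<mu> = 0")
    case True
    then show ?thesis using I1 by (simp add: error_bound_def f_def)
  next
    case False
    define R where "R = (real n * norm2 p \<mu> * sigma_star p \<sigma> + real n * (sigma_star p \<sigma>)\<^sup>2
            + sqrt (real n) * (sigma_tilde p \<sigma>)\<^sup>2) / (real n * (norm2 p \<mu>)\<^sup>2)"
    have N2: "0 < (\<Sum>i<p. (\<mu> i)\<^sup>2)"
    proof -
      have "0 \<le> (\<Sum>i<p. (\<mu> i)\<^sup>2)" by (simp add: sum_nonneg)
      moreover have "(\<Sum>i<p. (\<mu> i)\<^sup>2) \<noteq> 0" using False by (simp add: norm2_def)
      ultimately show ?thesis by simp
    qed
    have R0: "0 \<le> R" unfolding R_def
      by (intro divide_nonneg_nonneg add_nonneg_nonneg mult_nonneg_nonneg)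
         (auto simp: norm2_def sigma_star_nonneg sum_nonneg)
    have mb: "(\<integral>\<^sup>+g. ennreal (f g) \<partial>noise_space n p) \<le> ennreal (2304 * R)"
      unfolding f_def R_def by (rule main_bound[OF n l s0 vh N2])
    have I2: "(\<integral>g. f g \<partial>noise_space n p) \<le> 2304 * R"
      by (rule int_le_from_nn[OF f0 mb]) (use R0 in simp)
    have eb: "error_bound n p \<mu> \<sigma> = min R 1" using False by (simp add: error_bound_def R_def)
    show ?thesis
    proof (cases "R \<le> 1")
      case True then show ?thesis using I2 eb by (simp add: f_def)
    next
      case False then show ?thesis using I1 eb by (simp add: f_def)
    qed
  qed
qed


end
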